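(* Let $\lambda,\varepsilon,\sigma\in\mathbb{R}$ and $(x_0,y_0)\in\mathbb{R}^2\setminus\{(0,0)\}$. For a step size $0<\Delta t<1$, let $t_n=n\Delta t$ and let $\Delta B_{1,n}=B_1(t_{n+1})-B_1(t_n)$, where $B_1$ is a standard scalar Brownian motion on a complete probability space $(\Omega,\mathcal F,\mathbb P)$. Define the real sequence $\{\rho_n\}_{n\ge0}$ (the Milstein approximation of the modulus $|Z|$ of the solution of the system described in the context) by $\rho_0=\sqrt{x_0^2+y_0^2}$ and $$\rho_n=\rho_{n-1}\Big[1+\Big(\lambda+\tfrac{\varepsilon^2}{2}-\tfrac{\sigma^2}{2}\Big)\Delta t+\sigma\Delta B_{1,n-1}+\tfrac{\sigma^2}{2}\Delta B_{1,n-1}^2\Big],\quad n\ge1.$$ Then there exist $0<\Delta t_1<1$ and constants $C_1,C_2>0$ such that for all $0<\Delta t<\Delta t_1$, $$\lambda+\tfrac{\varepsilon^2}{2}+\tfrac{\sigma^2}{2}-C_1\Delta t\le\limsup_{n\to\infty}\frac{1}{t_n}\log\big[\mathbb E\rho_n^2\big]^{1/2}\le\lambda+\tfrac{\varepsilon^2}{2}+\tfrac{\sigma^2}{2}+C_1\Delta t,$$ and, almost surely, $$\lambda+\tfrac{\varepsilon^2}{2}-\tfrac{\sigma^2}{2}-C_2\Delta t^{1/2}\le\limsup_{n\to\infty}\frac{1}{t_n}\log|\rho_n|\le\lambda+\tfrac{\varepsilon^2}{2}-\tfrac{\sigma^2}{2}+C_2\Delta t^{1/2}.$$ Consequently, for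 all step sizes $0<\Delta t<\Delta t_1$: (a) if $\lambda+\frac{\varepsilon^2}{2}+\frac{\sigma^2}{2}<0$ then $\rho_n$ is mean-square exponentially stable, and if $\lambda+\frac{\varepsilon^2}{2}+\frac{\sigma^2}{2}>0$ then $\rho_n$ is mean-square exponentially blowing up; (b) if $\lambda+\frac{\varepsilon^2}{2}-\frac{\sigma^2}{2}<0$ then $\rho_n$ is almost-surely exponentially stable, and if $\lambda+\frac{\varepsilon^2}{2}-\frac{\sigma^2}{2}>0$ then $\rho_n$ is almost-surely exponentially blowing up.
   Context: The sequence $\rho_n$ is the Milstein approximation (denoted $|Z_n|$ in the paper) of the Euclidean norm $|Z(t)|$ of the solution $Z=(X,Y)^\top$ of the linear system $dZ=\lambda Z\,dt+\sigma Z\,dB_1(t)+\varepsilon\begin{pmatrix}0&-1\\1&0\end{pmatrix}Z\,dB_2(t)$, $Z(0)=(x_0,y_0)$, with $B_1,B_2$ standard scalar Brownian motions; by Itô's formula $d\log|Z|=(\lambda-\frac{\sigma^2-\varepsilon^2}{2})dt+\sigma dB_1$. Terminology: $\rho_n$ is mean-square exponentially stable if there exist $C,\alpha>0$ with $[\mathbb E\rho_n^2]^{1/2}\le Ce^{-\alpha t_n}$ for all large $n$, and mean-square exponentially blowing up if there exist $C,\beta>0$ with $[\mathbb E\rho_n^2]^{1/2}\ge Ce^{\beta t_n}$ for all large $n$; almost-surely exponentially stable (resp. blowing up) means that almost surely $|\rho_n|\le Ce^{-\alpha t_n}$ (resp. $|\rho_n|\ge Ce^{\beta t_n}$) for all large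 $n$, for some $\alpha>0$ (resp. $\beta>0$) and a (possibly random) constant $C>0$. $\Delta t_1$ and the constants may depend on $\lambda,\varepsilon,\sigma$. *)

theory Defs
  imports "HOL-Probability.Probability"
begin

definition brownian_motion :: "'a measure \<Rightarrow> (real \<Rightarrow> 'a \<Rightarrow> real) \<Rightarrow> bool" where
  "brownian_motion M B \<longleftrightarrow>
     prob_space M \<and>
     (\<forall>A N. N \<in> null_sets M \<and> A \<subseteq> N \<longrightarrow> A \<in> sets M) \<and>
     (\<forall>t. B t \<in> borel_measurable M) \<and>
     (AE \<omega> in M. B 0 \<omega> = 0) \<and>
     (\<forall>s t. 0 \<le> s \<and> s < t \<longrightarrow>
        distributed M lborel (\<lambda>\<omega>. B t \<omega> - B s \<omega>) (normal_density 0 (sqrt (t - s)))) \<and>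
     (\<forall>(n::nat) (ts::nat \<Rightarrow> real). 0 \<le> ts 0 \<and> (\<forall>i<n. ts i < ts (Suc i)) \<longrightarrow>
        prob_space.indep_vars M (\<lambda>_. borel) (\<lambda>i \<omega>. B (ts (Suc i)) \<omega> - B (ts i) \<omega>) {..<n}) \<and>
     (AE \<omega> in M. continuous_on {0..} (\<lambda>t. B t \<omega>))"

primrec milstein_rho ::
  "real \<Rightarrow> real \<Rightarrow> real \<Rightarrow> real \<Rightarrow> real \<Rightarrow> (real \<Rightarrow> 'a \<Rightarrow> real) \<Rightarrow> real \<Rightarrow> nat \<Rightarrow> 'a \<Rightarrow> real"
where
  "milstein_rho lam eps sig x0 y0 B dt 0 \<omega> = sqrt (x0\<^sup>2 + y0\<^sup>2)"
| "milstein_rho lam eps sig x0 y0 B dt (Suc n) \<omega> =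
     milstein_rho lam eps sig x0 y0 B dt n \<omega> *
     (1 + (lam + eps\<^sup>2 / 2 - sig\<^sup>2 / 2) * dt
        + sig * (B (real (Suc n) * dt) \<omega> - B (real n * dt) \<omega>)
        + sig\<^sup>2 / 2 * (B (real (Suc n) * dt) \<omega> - B (real n * dt) \<omega>)\<^sup>2)"

definition ms_exp_stable :: "'a measure \<Rightarrow> (nat \<Rightarrow> 'a \<Rightarrow> real) \<Rightarrow> real \<Rightarrow> bool" where
  "ms_exp_stable M rho dt \<longleftrightarrow> (\<exists>C \<alpha>. C > 0 \<and> \<alpha> > 0 \<and>
     (\<forall>\<^sub>F n in sequentially. sqrt (integral\<^sup>L M (\<lambda>\<omega>. (rho n \<omega>)\<^sup>2)) \<le> C * exp (- \<alpha> * (real n * dt))))"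

definition ms_exp_blowup :: "'a measure \<Rightarrow> (nat \<Rightarrow> 'a \<Rightarrow> real) \<Rightarrow> real \<Rightarrow> bool" where
  "ms_exp_blowup M rho dt \<longleftrightarrow> (\<exists>C \<beta>. C > 0 \<and> \<beta> > 0 \<and>
     (\<forall>\<^sub>F n in sequentially. sqrt (integral\<^sup>L M (\<lambda>\<omega>. (rho n \<omega>)\<^sup>2)) \<ge> C * exp (\<beta> * (real n * dt))))"

definition as_exp_stable :: "'a measure \<Rightarrow> (nat \<Rightarrow> 'a \<Rightarrow> real) \<Rightarrow> real \<Rightarrow> bool" where
  "as_exp_stable M rho dt \<longleftrightarrow> (\<exists>\<alpha>>0. AE \<omega> in M. \<exists>C>0.
     (\<forall>\<^sub>F n in sequentially. \<bar>rho n \<omega>\<bar> \<le> C * exp (- \<alpha> * (real n * dt))))"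

definition as_exp_blowup :: "'a measure \<Rightarrow> (nat \<Rightarrow> 'a \<Rightarrow> real) \<Rightarrow> real \<Rightarrow> bool" where
  "as_exp_blowup M rho dt \<longleftrightarrow> (\<exists>\<beta>>0. AE \<omega> in M. \<exists>C>0.
     (\<forall>\<^sub>F n in sequentially. \<bar>rho n \<omega>\<bar> \<ge> C * exp (\<beta> * (real n * dt))))"

end

theory Submission
  imports Defs
begin

lemma gauss_mom:
  fixes X :: "'a \<Rightarrow> real"
  assumes D: "distributed M lborel X (normal_density 0 (sqrt dt))" and dt: "dt > 0"
  shows "integrable M (\<lambda>\<omega>. X \<omega> ^ k)"
    and "(\<integral>\<omega>. X \<omega> ^ k \<partial>M) = (if odd k then 0 else fact k / (2^(k div 2) * fact (k div 2)) * dt^(k div 2))"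
proof -
  have s: "0 < sqrt dt" using dt by simp
  have nn: "\<And>x. 0 \<le> normal_density 0 (sqrt dt) x" by simp
  have i: "integrable lborel (\<lambda>x. normal_density 0 (sqrt dt) x * x ^ k)"
    using integrable_normal_moment[of "sqrt dt" 0 k, OF s] by simp
  show "integrable M (\<lambda>\<omega>. X \<omega> ^ k)"
    using distributed_integrable[OF D, of "\<lambda>x. x ^ k"] i by simp
  have eq: "(\<integral>\<omega>. X \<omega> ^ k \<partial>M) = (\<integral>x. normal_density 0 (sqrt dt) x * x ^ k \<partial>lborel)"
    using distributed_integral[OF D, of "\<lambda>x. x ^ k"] by simp
  show "(\<integral>\<omega>. X \<omega> ^ k \<partial>M) = (if odd k then 0 else fact k / (2^(k div 2) * fact (k div 2)) * dt^(k div 2))"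
  proof (cases "odd k")
    case True
    then obtain m where k: "k = 2 * m + 1" by (metis oddE)
    have "(\<integral>x. normal_density 0 (sqrt dt) x * x ^ k \<partial>lborel) = 0"
      using integral_normal_moment_odd[of "sqrt dt" 0 m, OF s] unfolding k by simp
    then show ?thesis using True eq by simp
  next
    case False
    then obtain m where k: "k = 2 * m" by (metis evenE)
    have "(\<integral>x. normal_density 0 (sqrt dt) x * x ^ k \<partial>lborel) = fact (2 * m) / ((2 / (sqrt dt)\<^sup>2)^m * fact m)"
      using integral_normal_moment_even[of "sqrt dt" 0 m, OF s] unfolding k by simp
    also have "\<dots> = fact k / (2^(k div 2) * fact (k div 2)) * dt^(k div 2)"
      using dt unfolding k by (simp add: power_divide field_simps)
    finally show ?thesis using False eq by simp
  qed
qed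

lemma gauss_poly8:
  fixes X :: "'a \<Rightarrow> real"
  assumes D: "distributed M lborel X (normal_density 0 (sqrt dt))" and dt: "dt > 0"
    and P: "prob_space M"
  shows "integrable M (\<lambda>\<omega>. c0 + c1 * X \<omega> + c2 * X \<omega>^2 + c3 * X \<omega>^3 + c4 * X \<omega>^4
          + c5 * X \<omega>^5 + c6 * X \<omega>^6 + c7 * X \<omega>^7 + c8 * X \<omega>^8)" (is ?I)
    and "(\<integral>\<omega>. c0 + c1 * X \<omega> + c2 * X \<omega>^2 + c3 * X \<omega>^3 + c4 * X \<omega>^4
          + c5 * X \<omega>^5 + c6 * X \<omega>^6 + c7 * X \<omega>^7 + c8 * X \<omega>^8 \<partial>M)
        = c0 + c2 * dt + 3 * c4 * dt^2 + 15 * c6 * dt^3 + 105 * c8 * dt^4" (is ?E)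
proof -
  note m = gauss_mom[OF D dt]
  have "finite_measure M" using P by (simp add: prob_space_def)
  hence ic: "integrable M (\<lambda>\<omega>. c)" for c :: real by (simp add: finite_measure.integrable_const)
  have i: "\<And>k c. integrable M (\<lambda>\<omega>. c * X \<omega> ^ k)" using m(1) by simp
  have i1: "\<And>c. integrable M (\<lambda>\<omega>. c * X \<omega>)" using i[of _ 1] by simp
  show ?I by (intro Bochner_Integration.integrable_add i i1 ic)
  have e: "\<And>k c. (\<integral>\<omega>. c * X \<omega> ^ k \<partial>M) = c * (\<integral>\<omega>. X \<omega> ^ k \<partial>M)" by simp
  have e1: "\<And>c. (\<integral>\<omega>. c * X \<omega> \<partial>M) = 0"
    using m(2)[of 1] by simp
  have ec: "(\<integral>\<omega>. c \<partial>M) = c" for c :: real using P by (simp add: prob_space.prob_space)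
  have m1: "(\<integral>\<omega>. X \<omega> \<partial>M) = 0" using m(2)[of 1] by simp
  have mo: "(\<integral>\<omega>. X \<omega>^2 \<partial>M) = dt" "(\<integral>\<omega>. X \<omega>^3 \<partial>M) = 0"
     "(\<integral>\<omega>. X \<omega>^4 \<partial>M) = 3 * dt^2" "(\<integral>\<omega>. X \<omega>^5 \<partial>M) = 0"
     "(\<integral>\<omega>. X \<omega>^6 \<partial>M) = 15 * dt^3" "(\<integral>\<omega>. X \<omega>^7 \<partial>M) = 0"
     "(\<integral>\<omega>. X \<omega>^8 \<partial>M) = 105 * dt^4"
    using m(2)[of 2] m(2)[of 3] m(2)[of 4] m(2)[of 5] m(2)[of 6] m(2)[of 7] m(2)[of 8]
    by (simp_all add: fact_numeral)
  show ?E
    apply (subst Bochner_Integration.integral_add; (intro Bochner_Integration.integrable_add i i1 ic)?)+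
    apply (simp only: integral_mult_right_zero ec mo)
    apply (simp add: m1)
    done
qed

lemma deriv_sign_min:
  fixes h h' :: "real \<Rightarrow> real"
  assumes "lo < 0" "lo < u"
    and d: "\<And>t. lo < t \<Longrightarrow> DERIV h t :> h' t"
    and neg: "\<And>t. lo < t \<Longrightarrow> t \<le> 0 \<Longrightarrow> h' t \<le> 0"
    and pos: "\<And>t. 0 \<le> t \<Longrightarrow> 0 \<le> h' t"
  shows "h 0 \<le> h u"
proof (cases "u \<ge> 0")
  case True
  show ?thesis
  proof (rule DERIV_nonneg_imp_nondecreasing[OF True])
    fix x assume "0 \<le> x" "x \<le> u"
    then show "\<exists>y. DERIV h x :> y \<and> y \<ge> 0"
      using d[of x] pos[of x] assms(1) by (auto intro!: exI[of _ "h' x"])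
  qed
next
  case False
  show ?thesis
  proof (rule DERIV_nonpos_imp_nonincreasing[of u 0])
    show "u \<le> 0" using False by simp
    fix x assume "u \<le> x" "x \<le> 0"
    then show "\<exists>y. DERIV h x :> y \<and> y \<le> 0"
      using d[of x] neg[of x] assms by (auto intro!: exI[of _ "h' x"])
  qed
qed

lemma cube_nonpos: "t \<le> 0 \<Longrightarrow> t^3 \<le> (0::real)"
  by (metis mult_nonneg_nonpos power3_eq_cube zero_le_square)

lemma ln_upper3:
  fixes u :: real assumes "u > -1"
  shows "ln (1 + u) \<le> u - u^2/2 + u^3/3"
proof -
  define h where "h t = t - t^2/2 + t^3/3 - ln (1 + t)" for t :: real
  have d: "DERIV h t :> t^3 / (1 + t)" if "-1 < t" for t
  proof -
    have "DERIV h t :> (1 - t + t^2 - 1/(1+t))"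
      unfolding h_def using that
      by (auto intro!: derivative_eq_intros simp: power2_eq_square power3_eq_cube field_simps)
    moreover have "1 - t + t^2 - 1/(1+t) = t^3/(1+t)" using that
      by (simp add: field_simps power2_eq_square power3_eq_cube) 
    ultimately show ?thesis by simp
  qed
  have "h 0 \<le> h u"
    by (rule deriv_sign_min[of "-1" u h "\<lambda>t. t^3/(1+t)"])
       (use assms d cube_nonpos in \<open>auto simp: divide_nonpos_pos\<close>)
  then show ?thesis by (simp add: h_def)
qed

lemma ln_lower4:
  fixes u :: real assumes "u \<ge> -3/4"
  shows "u - u^2/2 + u^3/3 - 64 * u^4 \<le> ln (1 + u)"
proof -
  define h where "h t = ln (1 + t) - (t - t^2/2 + t^3/3 - 64 * t^4)" for t :: real
  have d: "DERIV h t :> t^3 * (256 - 1 / (1 + t))" if "-1 < t" for t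
  proof -
    have "DERIV h t :> (1/(1+t) - (1 - t + t^2 - 256 * t^3))"
      unfolding h_def using that
      by (auto intro!: derivative_eq_intros simp: power2_eq_square power3_eq_cube field_simps)
    moreover have "1/(1+t) - (1 - t + t^2 - 256 * t^3) = t^3 * (256 - 1 / (1 + t))" using that
      by (simp add: field_simps power2_eq_square power3_eq_cube) 
    ultimately show ?thesis by simp
  qed
  have k: "1 / (1 + t) \<le> 256" if "-255/256 < t" for t :: real
    using that by (simp add: field_simps)
  have "h 0 \<le> h u"
  proof (rule deriv_sign_min[of "-255/256" u h "\<lambda>t. t^3 * (256 - 1 / (1 + t))"])
    fix t :: real assume "-255/256 < t" "t \<le> 0"
    then show "t ^ 3 * (256 - 1 / (1 + t)) \<le> 0"
      using k[of t] cube_nonpos[of t] by (intro mult_nonpos_nonneg) auto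
  next
    fix t :: real assume "0 \<le> t"
    then show "0 \<le> t ^ 3 * (256 - 1 / (1 + t))"
      using k[of t] by (intro mult_nonneg_nonneg) auto
  qed (use assms d in auto)
  then show ?thesis by (simp add: h_def)
qed

lemma exp_upper2:
  fixes y :: real
  shows "exp y \<le> 1 + y + y^2 / 2 * exp \<bar>y\<bar>"
proof (cases "y \<ge> 0")
  case True
  define h where "h t = 1 + t + t^2/2 * exp t - exp t" for t :: real
  have "h 0 \<le> h y"
  proof (rule DERIV_nonneg_imp_nondecreasing[OF True])
    fix x :: real assume x: "0 \<le> x" "x \<le> y"
    have "DERIV h x :> 1 + (x * exp x + x^2/2 * exp x) - exp x"
      unfolding h_def by (auto intro!: derivative_eq_intros simp: power2_eq_square field_simps)
    moreover have "exp x * (1 - x - x^2/2) \<le> 1"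
    proof -
      have "1 - x - x^2/2 \<le> exp (-x)"
      proof -
        have "0 \<le> x^2/2" by simp
        then show ?thesis using exp_ge_add_one_self[of "-x"] by linarith
      qed
      then have "exp x * (1 - x - x^2/2) \<le> exp x * exp (-x)" by (simp)
      then show ?thesis by (simp add: exp_minus)
    qed
    ultimately show "\<exists>z. DERIV h x :> z \<and> z \<ge> 0"
      by (intro exI[of _ "1 + (x * exp x + x^2/2 * exp x) - exp x"]) (auto simp: algebra_simps)
  qed
  then show ?thesis using True by (simp add: h_def)
next
  case False
  define h where "h t = 1 + t + t^2/2 - exp t" for t :: real
  have "h 0 \<le> h y"
  proof (rule DERIV_nonpos_imp_nonincreasing[of y 0])
    show "y \<le> 0" using False by simp
    fix x :: real assume x: "y \<le> x" "x \<le> 0"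
    have "DERIV h x :> 1 + x - exp x"
      unfolding h_def by (auto intro!: derivative_eq_intros simp: power2_eq_square field_simps)
    then show "\<exists>z. DERIV h x :> z \<and> z \<le> 0"
      using exp_ge_add_one_self[of x] by (intro exI[of _ "1 + x - exp x"]) auto
  qed
  then have "exp y \<le> 1 + y + y^2/2" by (simp add: h_def)
  also have "\<dots> \<le> 1 + y + y^2/2 * exp \<bar>y\<bar>"
    by (simp add: mult_le_cancel_left1 del: exp_le_cancel_iff)
  finally show ?thesis .
qed

lemma ln_abs_bound:
  fixes u :: real assumes "u \<ge> -3/4"
  shows "\<bar>ln (1 + u)\<bar> \<le> 4 * \<bar>u\<bar>"
proof -
  have up: "ln (1 + u) \<le> u" using ln_add_one_self_le_self2[of u] assms by simp
  have "ln (1 / (1 + u)) \<le> 1 / (1 + u) - 1" using assms by (intro ln_le_minus_one) auto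
  then have lo: "-ln (1 + u) \<le> -u / (1 + u)" using assms by (simp add: ln_div field_simps)
  show ?thesis
  proof (cases "u \<ge> 0")
    case True then show ?thesis using up ln_ge_zero[of "1+u"] by simp
  next
    case False
    have "1 / (1 + u) \<le> 4" using assms by (simp add: field_simps)
    then have "-u / (1 + u) \<le> -u * 4" using False
      by (metis divide_inverse inverse_eq_divide mult_left_mono neg_0_le_iff_le less_eq_real_def not_le)
    then show ?thesis using up lo False by simp
  qed
qed

lemma exp_abs_ln_bound:
  fixes g :: real assumes "g \<ge> 1/4"
  shows "exp \<bar>ln g\<bar> \<le> g + 4"
proof (cases "g \<ge> 1")
  case True then show ?thesis by simp
next
  case False
  then have "\<bar>ln g\<bar> = ln (1/g)" using assms by (simp add: ln_div)
  then have "exp \<bar>ln g\<bar> = 1/g" using assms by simp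
  also have "1/g \<le> 4" using assms by (simp add: field_simps)
  finally show ?thesis using assms by linarith
qed

lemma exp_theta_bound:
  fixes u \<theta> :: real assumes "u \<ge> -3/4" "\<bar>\<theta>\<bar> \<le> 1"
  shows "exp (\<theta> * ln (1 + u)) \<le> 1 + \<theta> * ln (1 + u) + 8 * \<theta>^2 * (u^3 + 5 * u^2)"
    and "exp (\<theta> * ln (1 + u)) \<le> u + 5"
proof -
  let ?L = "ln (1 + u)"
  have e1: "exp \<bar>\<theta> * ?L\<bar> \<le> u + 5"
  proof -
    have "\<bar>\<theta> * ?L\<bar> \<le> \<bar>?L\<bar>" using assms(2) by (simp add: abs_mult mult_left_le_one_le)
    then have "exp \<bar>\<theta> * ?L\<bar> \<le> exp \<bar>?L\<bar>" by simp
    also have "\<dots> \<le> (1 + u) + 4" using exp_abs_ln_bound[of "1+u"] assms by simp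
    finally show ?thesis by simp
  qed
  show "exp (\<theta> * ?L) \<le> u + 5"
    using e1 by (meson abs_ge_self exp_le_cancel_iff order_trans)
  have sq: "(\<theta> * ?L)^2 \<le> \<theta>^2 * (16 * u^2)"
  proof -
    have "?L^2 \<le> (4 * \<bar>u\<bar>)^2" using ln_abs_bound[OF assms(1)]
      by (metis abs_ge_zero power2_abs power_mono)
    then show ?thesis by (simp add: power_mult_distrib mult_left_mono)
  qed
  have "exp (\<theta> * ?L) \<le> 1 + \<theta> * ?L + (\<theta> * ?L)^2 / 2 * exp \<bar>\<theta> * ?L\<bar>"
    by (rule exp_upper2)
  also have "(\<theta> * ?L)^2 / 2 * exp \<bar>\<theta> * ?L\<bar> \<le> (\<theta>^2 * (16 * u^2)) / 2 * (u + 5)"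
    using sq e1 by (intro mult_mono divide_right_mono) auto
  also have "(\<theta>^2 * (16 * u^2)) / 2 * (u + 5) = 8 * \<theta>^2 * (u^3 + 5 * u^2)"
    by (simp add: power2_eq_square power3_eq_cube algebra_simps)
  finally show "exp (\<theta> * ?L) \<le> 1 + \<theta> * ?L + 8 * \<theta>^2 * (u^3 + 5 * u^2)" by simp
qed

definition gf :: "real \<Rightarrow> real \<Rightarrow> real \<Rightarrow> real \<Rightarrow> real" where
  "gf a sg d x = 1 + a*d + sg * x + sg^2/2*x^2"

lemma gf_ge: assumes "\<bar>a\<bar>*d \<le> 1/4" "0 \<le> d" shows "gf a sg d x \<ge> 1/4"
proof -
  have "gf a sg d x = (1 + sg * x)^2/2 + 1/2 + a*d" unfolding gf_def by (simp add: power2_eq_square field_simps)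
  moreover have "-\<bar>a\<bar>*d \<le> a*d" using assms(2) by (intro mult_right_mono) auto
  moreover have "0 \<le> (1 + sg * x)^2/2" by simp
  ultimately show ?thesis using assms(1) by linarith
qed

lemma absmul_bounds: "0 \<le> (c::real) \<Longrightarrow> -(c*\<bar>w\<bar>) \<le> c*w \<and> c*w \<le> c*\<bar>w\<bar>"
  using abs_le_iff[of "c*w" "c*\<bar>w\<bar>"] by (simp add: abs_mult)

lemma gf_borel[measurable]: "gf a s d \<in> borel_measurable borel"
  unfolding gf_def by measurable

context
  fixes M :: "'a measure" and X :: "'a \<Rightarrow> real" and dt a sg q :: real
  assumes D: "distributed M lborel X (normal_density 0 (sqrt dt))" and dt: "dt > 0"
    and P: "prob_space M"
begin

lemma u1: "integrable M (\<lambda>\<omega>. a*dt + sg*X \<omega> + q*X \<omega>^2)"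
  "(\<integral>\<omega>. a*dt + sg*X \<omega> + q*X \<omega>^2 \<partial>M) = q*dt + a*dt"
proof -
  have eq: "(\<lambda>\<omega>. a*dt + sg*X \<omega> + q*X \<omega>^2) = (\<lambda>\<omega>. (a*dt) + sg * X \<omega> + q * X \<omega>^2 + 0 * X \<omega>^3 + 0 * X \<omega>^4
          + 0 * X \<omega>^5 + 0 * X \<omega>^6 + 0 * X \<omega>^7 + 0 * X \<omega>^8)" by (intro ext) simp
  show "integrable M (\<lambda>\<omega>. a*dt + sg*X \<omega> + q*X \<omega>^2)" unfolding eq by (rule gauss_poly8(1)[OF D dt P])
  show "(\<integral>\<omega>. a*dt + sg*X \<omega> + q*X \<omega>^2 \<partial>M) = q*dt + a*dt" unfolding eq gauss_poly8(2)[OF D dt P] by simp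
qed

lemma u2: "integrable M (\<lambda>\<omega>. (a*dt + sg*X \<omega> + q*X \<omega>^2)^2)"
  "(\<integral>\<omega>. (a*dt + sg*X \<omega> + q*X \<omega>^2)^2 \<partial>M) = 3*q^2*dt^2 + sg^2*dt + 2*a*q*dt^2 + a^2*dt^2"
proof -
  have eq: "(\<lambda>\<omega>. (a*dt + sg*X \<omega> + q*X \<omega>^2)^2) = (\<lambda>\<omega>. (a^2*dt^2) + (2*a * sg*dt) * X \<omega> + (sg^2 + 2*a*q*dt) * X \<omega>^2 + (2 * sg*q) * X \<omega>^3 + (q^2) * X \<omega>^4
          + 0 * X \<omega>^5 + 0 * X \<omega>^6 + 0 * X \<omega>^7 + 0 * X \<omega>^8)" by (intro ext) algebra
  show "integrable M (\<lambda>\<omega>. (a*dt + sg*X \<omega> + q*X \<omega>^2)^2)" unfolding eq by (rule gauss_poly8(1)[OF D dt P])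
  show "(\<integral>\<omega>. (a*dt + sg*X \<omega> + q*X \<omega>^2)^2 \<partial>M) = 3*q^2*dt^2 + sg^2*dt + 2*a*q*dt^2 + a^2*dt^2"
    unfolding eq gauss_poly8(2)[OF D dt P] by algebra
qed

lemma u3: "integrable M (\<lambda>\<omega>. (a*dt + sg*X \<omega> + q*X \<omega>^2)^3)"
  "(\<integral>\<omega>. (a*dt + sg*X \<omega> + q*X \<omega>^2)^3 \<partial>M) = dt^2 * (15*q^3*dt + 9 * sg^2*q + 9*a*q^2*dt + 3*a * sg^2 + 3*a^2*q*dt + a^3*dt)"
proof -
  have eq: "(\<lambda>\<omega>. (a*dt + sg*X \<omega> + q*X \<omega>^2)^3) = (\<lambda>\<omega>. (a^3*dt^3) + (3*a^2 * sg*dt^2) * X \<omega> + (3*a * sg^2*dt + 3*a^2*q*dt^2) * X \<omega>^2 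
       + (sg^3 + 6*a * sg*q*dt) * X \<omega>^3 + (3 * sg^2*q + 3*a*q^2*dt) * X \<omega>^4
          + (3 * sg*q^2) * X \<omega>^5 + (q^3) * X \<omega>^6 + 0 * X \<omega>^7 + 0 * X \<omega>^8)" by (intro ext) algebra
  show "integrable M (\<lambda>\<omega>. (a*dt + sg*X \<omega> + q*X \<omega>^2)^3)" unfolding eq by (rule gauss_poly8(1)[OF D dt P])
  show "(\<integral>\<omega>. (a*dt + sg*X \<omega> + q*X \<omega>^2)^3 \<partial>M) = dt^2 * (15*q^3*dt + 9 * sg^2*q + 9*a*q^2*dt + 3*a * sg^2 + 3*a^2*q*dt + a^3*dt)"
    unfolding eq gauss_poly8(2)[OF D dt P] by algebra
qed

lemma u4: "integrable M (\<lambda>\<omega>. (a*dt + sg*X \<omega> + q*X \<omega>^2)^4)"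
  "(\<integral>\<omega>. (a*dt + sg*X \<omega> + q*X \<omega>^2)^4 \<partial>M) = dt^2 * (105*q^4*dt^2 + 90 * sg^2*q^2*dt + 3 * sg^4 + 60*a*q^3*dt^2 + 36*a * sg^2*q*dt + 18*a^2*q^2*dt^2 + 6*a^2 * sg^2*dt + 4*a^3*q*dt^2 + a^4*dt^2)"
proof -
  have eq: "(\<lambda>\<omega>. (a*dt + sg*X \<omega> + q*X \<omega>^2)^4) = (\<lambda>\<omega>. (a^4*dt^4) + (4*a^3 * sg*dt^3) * X \<omega> + (6*a^2 * sg^2*dt^2 + 4*a^3*q*dt^3) * X \<omega>^2 
       + (4*a * sg^3*dt + 12*a^2 * sg*q*dt^2) * X \<omega>^3 + (sg^4 + 12*a * sg^2*q*dt + 6*a^2*q^2*dt^2) * X \<omega>^4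
          + (4 * sg^3*q + 12*a * sg*q^2*dt) * X \<omega>^5 + (6 * sg^2*q^2 + 4*a*q^3*dt) * X \<omega>^6 + (4 * sg*q^3) * X \<omega>^7 + q^4 * X \<omega>^8)" by (intro ext) algebra
  show "integrable M (\<lambda>\<omega>. (a*dt + sg*X \<omega> + q*X \<omega>^2)^4)" unfolding eq by (rule gauss_poly8(1)[OF D dt P])
  show "(\<integral>\<omega>. (a*dt + sg*X \<omega> + q*X \<omega>^2)^4 \<partial>M) = dt^2 * (105*q^4*dt^2 + 90 * sg^2*q^2*dt + 3 * sg^4 + 60*a*q^3*dt^2 + 36*a * sg^2*q*dt + 18*a^2*q^2*dt^2 + 6*a^2 * sg^2*dt + 4*a^3*q*dt^2 + a^4*dt^2)"
    unfolding eq gauss_poly8(2)[OF D dt P] by algebra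
qed

end


definition Wf :: "real \<Rightarrow> real \<Rightarrow> real" where
  "Wf a sg = 3*(sg^2/2)^2 + 2*a*(sg^2/2) + a^2"
definition R3f :: "real \<Rightarrow> real \<Rightarrow> real \<Rightarrow> real" where
  "R3f a sg dt = (let q = sg^2/2 in 15*q^3*dt + 9 * sg^2*q + 9*a*q^2*dt + 3*a * sg^2 + 3*a^2*q*dt + a^3*dt)"
definition R4f :: "real \<Rightarrow> real \<Rightarrow> real \<Rightarrow> real" where
  "R4f a sg dt = (let q = sg^2/2 in 105*q^4*dt^2 + 90 * sg^2*q^2*dt + 3 * sg^4 + 60*a*q^3*dt^2 + 36*a * sg^2*q*dt + 18*a^2*q^2*dt^2 + 6*a^2 * sg^2*dt + 4*a^3*q*dt^2 + a^4*dt^2)"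

context
  fixes M :: "'a measure" and X :: "'a \<Rightarrow> real" and dt a sg :: real
  assumes D: "distributed M lborel X (normal_density 0 (sqrt dt))" and dt: "dt > 0"
    and P: "prob_space M" and ha: "\<bar>a\<bar>*dt \<le> 1/4"
begin

lemma Xmeas[measurable]: "X \<in> borel_measurable M"
  using distributed_measurable[OF D] by simp

definition "U \<omega> = a*dt + sg * X \<omega> + sg^2/2*X \<omega>^2"

lemma G_eq: "gf a sg dt (X \<omega>) = 1 + U \<omega>"
  unfolding gf_def U_def by simp

lemma U_ge: "U \<omega> \<ge> -3/4"
  using gf_ge[OF ha, of sg "X \<omega>"] dt G_eq[of \<omega>] by simp

lemma U_meas[measurable]: "U \<in> borel_measurable M"
  unfolding U_def by measurable

lemmas U1 = u1[OF D dt P, where q="sg^2/2" and a=a and sg=sg, folded U_def]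
lemmas U2 = u2[OF D dt P, where q="sg^2/2" and a=a and sg=sg, folded U_def]
lemmas U3 = u3[OF D dt P, where q="sg^2/2" and a=a and sg=sg, folded U_def]
lemmas U4 = u4[OF D dt P, where q="sg^2/2" and a=a and sg=sg, folded U_def]

lemma EU2: "(\<integral>\<omega>. (U \<omega>)^2 \<partial>M) = sg^2*dt + dt^2 * Wf a sg"
  unfolding U2(2) Wf_def by (simp add: algebra_simps power2_eq_square)
lemma EU3: "(\<integral>\<omega>. (U \<omega>)^3 \<partial>M) = dt^2 * R3f a sg dt"
  unfolding U3(2) R3f_def Let_def by simp
lemma EU4: "(\<integral>\<omega>. (U \<omega>)^4 \<partial>M) = dt^2 * R4f a sg dt"
  unfolding U4(2) R4f_def Let_def by simp

lemma lnG_int: "integrable M (\<lambda>\<omega>. ln (gf a sg dt (X \<omega>)))"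
proof -
  have i: "integrable M (\<lambda>\<omega>. \<bar>U \<omega> - (U \<omega>)^2/2 + (U \<omega>)^3/3\<bar> + 64 * (U \<omega>)^4)"
    using U1(1) U2(1) U3(1) U4(1) by (intro Bochner_Integration.integrable_add integrable_abs Bochner_Integration.integrable_diff integrable_divide integrable_mult_right) auto
  show ?thesis
  proof (rule Bochner_Integration.integrable_bound[OF i])
    show "(\<lambda>\<omega>. ln (gf a sg dt (X \<omega>))) \<in> borel_measurable M" by measurable
    show "AE \<omega> in M. norm (ln (gf a sg dt (X \<omega>))) \<le> norm (\<bar>U \<omega> - (U \<omega>)^2/2 + (U \<omega>)^3/3\<bar> + 64 * (U \<omega>)^4)"
    proof (intro AE_I2)
      fix \<omega>
      have l: "U \<omega> - (U \<omega>)^2/2 + (U \<omega>)^3/3 - 64 * (U \<omega>)^4 \<le> ln (1 + U \<omega>)" by (rule ln_lower4[OF U_ge])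
      have u: "ln (1 + U \<omega>) \<le> U \<omega> - (U \<omega>)^2/2 + (U \<omega>)^3/3" using U_ge[of \<omega>] by (intro ln_upper3) auto
      have "0 \<le> 64 * (U \<omega>)^4" by simp
      then show "norm (ln (gf a sg dt (X \<omega>))) \<le> norm (\<bar>U \<omega> - (U \<omega>)^2/2 + (U \<omega>)^3/3\<bar> + 64 * (U \<omega>)^4)"
        unfolding G_eq using l u by (simp add: abs_le_iff) linarith
    qed
  qed
qed

lemma mu_bound: "\<bar>(\<integral>\<omega>. ln (gf a sg dt (X \<omega>)) \<partial>M) - a*dt\<bar>
   \<le> dt^2 * (\<bar>Wf a sg\<bar>/2 + \<bar>R3f a sg dt\<bar>/3 + 64 * \<bar>R4f a sg dt\<bar>)"
proof -
  have ip: "integrable M (\<lambda>\<omega>. U \<omega> - (U \<omega>)^2/2 + (U \<omega>)^3/3)"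
    using U1(1) U2(1) U3(1) by (intro Bochner_Integration.integrable_add Bochner_Integration.integrable_diff integrable_divide) auto
  have Ep: "(\<integral>\<omega>. U \<omega> - (U \<omega>)^2/2 + (U \<omega>)^3/3 \<partial>M) = a*dt - dt^2 * Wf a sg / 2 + dt^2 * R3f a sg dt / 3"
  proof -
    have "(\<integral>\<omega>. U \<omega> - (U \<omega>)^2/2 + (U \<omega>)^3/3 \<partial>M) = (\<integral>\<omega>. U \<omega> \<partial>M) - (\<integral>\<omega>. (U \<omega>)^2 \<partial>M)/2 + (\<integral>\<omega>. (U \<omega>)^3 \<partial>M)/3"
      using U1(1) U2(1) U3(1)
      by (simp add: Bochner_Integration.integral_add Bochner_Integration.integral_diff Bochner_Integration.integrable_diff integrable_divide)
    also have "\<dots> = a*dt - dt^2 * Wf a sg / 2 + dt^2 * R3f a sg dt / 3"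
      unfolding U1(2)[unfolded U_def[symmetric]] EU2 EU3 by (simp add: algebra_simps)
    finally show ?thesis .
  qed
  have up: "(\<integral>\<omega>. ln (gf a sg dt (X \<omega>)) \<partial>M) \<le> (\<integral>\<omega>. U \<omega> - (U \<omega>)^2/2 + (U \<omega>)^3/3 \<partial>M)"
  proof (rule integral_mono[OF lnG_int ip])
    fix \<omega> show "ln (gf a sg dt (X \<omega>)) \<le> U \<omega> - (U \<omega>)^2/2 + (U \<omega>)^3/3"
      unfolding G_eq using U_ge[of \<omega>] by (intro ln_upper3) linarith
  qed
  have i4: "integrable M (\<lambda>\<omega>. 64 * (U \<omega>)^4)" using U4(1) by auto
  have lo: "(\<integral>\<omega>. U \<omega> - (U \<omega>)^2/2 + (U \<omega>)^3/3 \<partial>M) - (\<integral>\<omega>. 64 * (U \<omega>)^4 \<partial>M) \<le> (\<integral>\<omega>. ln (gf a sg dt (X \<omega>)) \<partial>M)"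
  proof -
    have "(\<integral>\<omega>. U \<omega> - (U \<omega>)^2/2 + (U \<omega>)^3/3 \<partial>M) - (\<integral>\<omega>. 64 * (U \<omega>)^4 \<partial>M)
       = (\<integral>\<omega>. U \<omega> - (U \<omega>)^2/2 + (U \<omega>)^3/3 - 64 * (U \<omega>)^4 \<partial>M)"
      using ip i4 by (simp add: Bochner_Integration.integral_diff)
    also have "\<dots> \<le> (\<integral>\<omega>. ln (gf a sg dt (X \<omega>)) \<partial>M)"
      using Bochner_Integration.integrable_diff[OF ip i4] lnG_int
      by (rule integral_mono) (use U_ge ln_lower4 in \<open>auto simp: G_eq\<close>)
    finally show ?thesis .
  qed
  have E4: "(\<integral>\<omega>. 64 * (U \<omega>)^4 \<partial>M) = 64 * (dt^2 * R4f a sg dt)" using EU4 by simp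
  have "\<bar>R4f a sg dt\<bar> \<ge> 0" "\<bar>Wf a sg\<bar> \<ge> 0" by auto
  have d2: "dt^2 > 0" using dt by simp
  have a1: "dt^2 * Wf a sg \<le> dt^2 * \<bar>Wf a sg\<bar>" "- (dt^2 * \<bar>Wf a sg\<bar>) \<le> dt^2 * Wf a sg"
    "dt^2 * R3f a sg dt \<le> dt^2 * \<bar>R3f a sg dt\<bar>" "- (dt^2 * \<bar>R3f a sg dt\<bar>) \<le> dt^2 * R3f a sg dt"
    "dt^2 * R4f a sg dt \<le> dt^2 * \<bar>R4f a sg dt\<bar>"
    using absmul_bounds[of "dt^2" "Wf a sg"] absmul_bounds[of "dt^2" "R3f a sg dt"] absmul_bounds[of "dt^2" "R4f a sg dt"] by auto
  show ?thesis using up lo Ep E4 a1 by (simp add: abs_le_iff algebra_simps) 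
qed

lemma phi_bound:
  assumes th: "\<bar>\<theta>\<bar> \<le> 1"
  shows "integrable M (\<lambda>\<omega>. exp (\<theta> * ln (gf a sg dt (X \<omega>))))"
    and "(\<integral>\<omega>. exp (\<theta> * ln (gf a sg dt (X \<omega>))) \<partial>M)
       \<le> 1 + \<theta> * (\<integral>\<omega>. ln (gf a sg dt (X \<omega>)) \<partial>M) + 8 * \<theta>^2 * (dt^2 * R3f a sg dt + 5 * (sg^2*dt + dt^2 * Wf a sg))"
proof -
  have ib: "integrable M (\<lambda>\<omega>. U \<omega> + 5)"
    using U1(1) P by (intro Bochner_Integration.integrable_add) (auto simp: prob_space_def finite_measure.integrable_const U_def)
  show ie: "integrable M (\<lambda>\<omega>. exp (\<theta> * ln (gf a sg dt (X \<omega>))))"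
  proof (rule Bochner_Integration.integrable_bound[OF ib])
    show "(\<lambda>\<omega>. exp (\<theta> * ln (gf a sg dt (X \<omega>)))) \<in> borel_measurable M" by measurable
    show "AE \<omega> in M. norm (exp (\<theta> * ln (gf a sg dt (X \<omega>)))) \<le> norm (U \<omega> + 5)"
    proof (intro AE_I2)
      fix \<omega> have "exp (\<theta> * ln (1 + U \<omega>)) \<le> U \<omega> + 5" by (rule exp_theta_bound(2)[OF U_ge th])
      also have "\<dots> \<le> \<bar>U \<omega> + 5\<bar>" by simp
      finally show "norm (exp (\<theta> * ln (gf a sg dt (X \<omega>)))) \<le> norm (U \<omega> + 5)" by (simp add: G_eq)
    qed
  qed
  have i2: "integrable M (\<lambda>\<omega>. 1 + \<theta> * ln (gf a sg dt (X \<omega>)) + 8 * \<theta>^2 * ((U \<omega>)^3 + 5 * (U \<omega>)^2))"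
    using lnG_int U2(1) U3(1) P
    by (intro Bochner_Integration.integrable_add integrable_mult_right) (auto simp: prob_space_def finite_measure.integrable_const)
  have "(\<integral>\<omega>. exp (\<theta> * ln (gf a sg dt (X \<omega>))) \<partial>M) \<le> (\<integral>\<omega>. 1 + \<theta> * ln (gf a sg dt (X \<omega>)) + 8 * \<theta>^2 * ((U \<omega>)^3 + 5 * (U \<omega>)^2) \<partial>M)"
    using ie i2 by (rule integral_mono) (use exp_theta_bound(1)[OF U_ge th] in \<open>auto simp: G_eq\<close>)
  also have "\<dots> = 1 + \<theta> * (\<integral>\<omega>. ln (gf a sg dt (X \<omega>)) \<partial>M) + 8 * \<theta>^2 * ((\<integral>\<omega>. (U \<omega>)^3 \<partial>M) + 5 * (\<integral>\<omega>. (U \<omega>)^2 \<partial>M))"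
  proof -
    have i_c: "integrable M (\<lambda>\<omega>. 1::real)" using P by (simp add: prob_space_def finite_measure.integrable_const)
    have iL: "integrable M (\<lambda>\<omega>. \<theta> * ln (gf a sg dt (X \<omega>)))" using lnG_int by simp
    have i3: "integrable M (\<lambda>\<omega>. (U \<omega>)^3)" by (rule U3(1))
    have i2': "integrable M (\<lambda>\<omega>. 5 * (U \<omega>)^2)" using U2(1) by simp
    have iQ: "integrable M (\<lambda>\<omega>. 8 * \<theta>^2 * ((U \<omega>)^3 + 5 * (U \<omega>)^2))"
      using Bochner_Integration.integrable_add[OF i3 i2'] by simp
    have "(\<integral>\<omega>. 1 + \<theta> * ln (gf a sg dt (X \<omega>)) + 8 * \<theta>^2 * ((U \<omega>)^3 + 5 * (U \<omega>)^2) \<partial>M)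
      = (\<integral>\<omega>. 1 \<partial>M) + (\<integral>\<omega>. \<theta> * ln (gf a sg dt (X \<omega>)) \<partial>M) + (\<integral>\<omega>. 8 * \<theta>^2 * ((U \<omega>)^3 + 5 * (U \<omega>)^2) \<partial>M)"
      by (simp only: Bochner_Integration.integral_add[OF Bochner_Integration.integrable_add[OF i_c iL] iQ] Bochner_Integration.integral_add[OF i_c iL])
    also have "(\<integral>\<omega>. 8 * \<theta>^2 * ((U \<omega>)^3 + 5 * (U \<omega>)^2) \<partial>M) = 8 * \<theta>^2 * ((\<integral>\<omega>. (U \<omega>)^3 \<partial>M) + 5 * (\<integral>\<omega>. (U \<omega>)^2 \<partial>M))"
      using Bochner_Integration.integral_add[OF i3 i2'] by simp
    also have "(\<integral>\<omega>. 1 \<partial>M) = (1::real)" using P by (simp add: prob_space.prob_space)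
    finally show ?thesis by simp
  qed
  also have "\<dots> = 1 + \<theta> * (\<integral>\<omega>. ln (gf a sg dt (X \<omega>)) \<partial>M) + 8 * \<theta>^2 * (dt^2 * R3f a sg dt + 5 * (sg^2*dt + dt^2 * Wf a sg))"
    unfolding EU2 EU3 ..
  finally show "(\<integral>\<omega>. exp (\<theta> * ln (gf a sg dt (X \<omega>))) \<partial>M)
       \<le> 1 + \<theta> * (\<integral>\<omega>. ln (gf a sg dt (X \<omega>)) \<partial>M) + 8 * \<theta>^2 * (dt^2 * R3f a sg dt + 5 * (sg^2*dt + dt^2 * Wf a sg))" .
qed

lemma Eg2: "integrable M (\<lambda>\<omega>. (gf a sg dt (X \<omega>))^2)"
  "(\<integral>\<omega>. (gf a sg dt (X \<omega>))^2 \<partial>M) = 1 + dt*(2*a + 2* sg^2) + dt^2 * Wf a sg"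
proof -
  have eq: "(\<lambda>\<omega>. (gf a sg dt (X \<omega>))^2) = (\<lambda>\<omega>. 1 + 2 * U \<omega> + (U \<omega>)^2)"
    by (intro ext) (simp add: G_eq power2_eq_square algebra_simps)
  have i_c: "integrable M (\<lambda>\<omega>. 1::real)" using P by (simp add: prob_space_def finite_measure.integrable_const)
  have iU: "integrable M U" by (rule U1(1))
  have i1: "integrable M (\<lambda>\<omega>. 2 * U \<omega>)" using iU by simp
  show "integrable M (\<lambda>\<omega>. (gf a sg dt (X \<omega>))^2)" unfolding eq
    using i_c i1 U2(1) by (intro Bochner_Integration.integrable_add)
  have "(\<integral>\<omega>. (gf a sg dt (X \<omega>))^2 \<partial>M) = (\<integral>\<omega>. 1 \<partial>M) + (\<integral>\<omega>. 2 * U \<omega> \<partial>M) + (\<integral>\<omega>. (U \<omega>)^2 \<partial>M)"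
    unfolding eq by (simp only: Bochner_Integration.integral_add[OF Bochner_Integration.integrable_add[OF i_c i1] U2(1)] Bochner_Integration.integral_add[OF i_c i1])
  also have "\<dots> = 1 + dt*(2*a + 2* sg^2) + dt^2 * Wf a sg"
  proof -
    have "(\<integral>\<omega>. U \<omega> \<partial>M) = sg^2/2*dt + a*dt" by (rule U1(2))
    then show ?thesis using P unfolding EU2 by (simp add: prob_space.prob_space algebra_simps)
  qed
  finally show "(\<integral>\<omega>. (gf a sg dt (X \<omega>))^2 \<partial>M) = 1 + dt*(2*a + 2* sg^2) + dt^2 * Wf a sg" .
qed

end

definition Xk :: "(real \<Rightarrow> 'a \<Rightarrow> real) \<Rightarrow> real \<Rightarrow> nat \<Rightarrow> 'a \<Rightarrow> real" where
  "Xk B dt k \<omega> = B (real (Suc k) * dt) \<omega> - B (real k * dt) \<omega>"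

lemma rho_prod:
  "milstein_rho lam eps sig x0 y0 B dt n \<omega> =
     sqrt (x0\<^sup>2 + y0\<^sup>2) * (\<Prod>k<n. gf (lam + eps\<^sup>2/2 - sig\<^sup>2/2) sig dt (Xk B dt k \<omega>))"
  by (induction n) (simp_all add: gf_def Xk_def)

context
  fixes M :: "'a measure" and B :: "real \<Rightarrow> 'a \<Rightarrow> real" and dt :: real
  assumes BM: "brownian_motion M B" and dt: "dt > 0"
begin

lemmas bmc = BM[unfolded brownian_motion_def]
lemma P: "prob_space M" using bmc by (rule conjunct1)
lemma B_meas[measurable]: "B t \<in> borel_measurable M"
  using bmc[THEN conjunct2, THEN conjunct2, THEN conjunct1] by (rule spec)
lemmas bm_dist = bmc[THEN conjunct2, THEN conjunct2, THEN conjunct2, THEN conjunct2, THEN conjunct1]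
lemmas bm_indep = bmc[THEN conjunct2, THEN conjunct2, THEN conjunct2, THEN conjunct2, THEN conjunct2, THEN conjunct1]

lemma Xk_meas[measurable]: "Xk B dt k \<in> borel_measurable M"
  unfolding Xk_def[abs_def] by measurable

lemma Xk_dist: "distributed M lborel (Xk B dt k) (normal_density 0 (sqrt dt))"
proof -
  have "real k * dt < real (Suc k) * dt" using dt by simp
  moreover have "0 \<le> real k * dt" using dt by simp
  ultimately have "distributed M lborel (\<lambda>\<omega>. B (real (Suc k) * dt) \<omega> - B (real k * dt) \<omega>)
     (normal_density 0 (sqrt (real (Suc k) * dt - real k * dt)))"
    using bm_dist[rule_format, of "real k * dt" "real (Suc k) * dt"] by blast
  moreover have "real (Suc k) * dt - real k * dt = dt" by (simp add: algebra_simps)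
  ultimately show ?thesis unfolding Xk_def[abs_def] by simp
qed

lemma Xk_indep: "prob_space.indep_vars M (\<lambda>_. borel) (Xk B dt) {..<n}"
proof -
  have "0 \<le> (\<lambda>i. real i * dt) 0 \<and> (\<forall>i<n. (\<lambda>i. real i * dt) i < (\<lambda>i. real i * dt) (Suc i))"
    using dt by simp
  then have "prob_space.indep_vars M (\<lambda>_. borel) (\<lambda>i \<omega>. B ((\<lambda>i. real i * dt) (Suc i)) \<omega> - B ((\<lambda>i. real i * dt) i) \<omega>) {..<n}"
    using bm_indep[rule_format, of "\<lambda>i. real i * dt" n] by blast
  then show ?thesis unfolding Xk_def[abs_def] by simp
qed

lemma E_same:
  fixes f :: "real \<Rightarrow> real"
  assumes [measurable]: "f \<in> borel_measurable borel"
  shows "(\<integral>\<omega>. f (Xk B dt k \<omega>) \<partial>M) = (\<integral>\<omega>. f (Xk B dt 0 \<omega>) \<partial>M)"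
proof -
  have "(\<integral>\<omega>. f (Xk B dt k \<omega>) \<partial>M) = (\<integral>x. normal_density 0 (sqrt dt) x * f x \<partial>lborel)"
    by (rule distributed_integral[OF Xk_dist, symmetric]) auto
  also have "\<dots> = (\<integral>\<omega>. f (Xk B dt 0 \<omega>) \<partial>M)"
    by (rule distributed_integral[OF Xk_dist]) auto
  finally show ?thesis .
qed

lemma E_prod:
  fixes f :: "real \<Rightarrow> real"
  assumes [measurable]: "f \<in> borel_measurable borel"
    and int: "\<And>k. integrable M (\<lambda>\<omega>. f (Xk B dt k \<omega>))"
  shows "(\<integral>\<omega>. (\<Prod>k<n. f (Xk B dt k \<omega>)) \<partial>M) = (\<integral>\<omega>. f (Xk B dt 0 \<omega>) \<partial>M) ^ n"
    and "integrable M (\<lambda>\<omega>. (\<Prod>k<n. f (Xk B dt k \<omega>)))"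
proof -
  have ind: "prob_space.indep_vars M (\<lambda>_. borel) (\<lambda>k \<omega>. f (Xk B dt k \<omega>)) {..<n}"
    by (rule prob_space.indep_vars_compose2[OF P Xk_indep]) auto
  have "(\<integral>\<omega>. (\<Prod>k<n. f (Xk B dt k \<omega>)) \<partial>M) = (\<Prod>k<n. \<integral>\<omega>. f (Xk B dt k \<omega>) \<partial>M)"
    by (rule prob_space.indep_vars_lebesgue_integral[OF P]) (auto intro: ind int)
  also have "\<dots> = (\<Prod>k<n. \<integral>\<omega>. f (Xk B dt 0 \<omega>) \<partial>M)"
    by (intro prod.cong refl E_same) auto
  finally show "(\<integral>\<omega>. (\<Prod>k<n. f (Xk B dt k \<omega>)) \<partial>M) = (\<integral>\<omega>. f (Xk B dt 0 \<omega>) \<partial>M) ^ n" by simp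
  show "integrable M (\<lambda>\<omega>. (\<Prod>k<n. f (Xk B dt k \<omega>)))"
    by (rule prob_space.indep_vars_integrable[OF P]) (auto intro: ind int)
qed

end

context
  fixes M :: "'a measure" and B :: "real \<Rightarrow> 'a \<Rightarrow> real" and dt a sig :: real
  assumes BM: "brownian_motion M B" and dt: "dt > 0" and ha: "\<bar>a\<bar>*dt \<le> 1/4"
begin

lemma PM: "prob_space M" by (rule P[OF BM dt])

lemma gf_pos: "gf a sig dt x > 0" using gf_ge[OF ha, of sig x] dt by simp

lemma ms_value:
  "(\<integral>\<omega>. (c * (\<Prod>k<n. gf a sig dt (Xk B dt k \<omega>)))^2 \<partial>M)
     = c^2 * (1 + dt*(2*a + 2* sig^2) + dt^2 * Wf a sig) ^ n"
proof -
  have f: "(\<lambda>x. (gf a sig dt x)^2) \<in> borel_measurable borel" by measurable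
  have int: "integrable M (\<lambda>\<omega>. (gf a sig dt (Xk B dt k \<omega>))^2)" for k
    by (rule Eg2(1)[OF Xk_dist[OF BM dt] dt PM ha])
  have "(\<lambda>\<omega>. (c * (\<Prod>k<n. gf a sig dt (Xk B dt k \<omega>)))^2) = (\<lambda>\<omega>. c^2 * (\<Prod>k<n. (gf a sig dt (Xk B dt k \<omega>))^2))"
    by (simp add: power_mult_distrib prod_power_distrib)
  then have "(\<integral>\<omega>. (c * (\<Prod>k<n. gf a sig dt (Xk B dt k \<omega>)))^2 \<partial>M) = c^2 * (\<integral>\<omega>. (\<Prod>k<n. (gf a sig dt (Xk B dt k \<omega>))^2) \<partial>M)"
    by simp
  also have "(\<integral>\<omega>. (\<Prod>k<n. (gf a sig dt (Xk B dt k \<omega>))^2) \<partial>M) = (\<integral>\<omega>. (gf a sig dt (Xk B dt 0 \<omega>))^2 \<partial>M) ^ n"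
    by (rule E_prod(1)[OF BM dt f int])
  also have "(\<integral>\<omega>. (gf a sig dt (Xk B dt 0 \<omega>))^2 \<partial>M) = 1 + dt*(2*a + 2* sig^2) + dt^2 * Wf a sig"
    by (rule Eg2(2)[OF Xk_dist[OF BM dt] dt PM ha])
  finally show ?thesis .
qed

definition "Lk k \<omega> = ln (gf a sig dt (Xk B dt k \<omega>))"
definition "S n \<omega> = (\<Sum>k<n. Lk k \<omega>)"
definition "mu = (\<integral>\<omega>. Lk 0 \<omega> \<partial>M)"

lemma Lk_meas[measurable]: "Lk k \<in> borel_measurable M"
  unfolding Lk_def[abs_def] using Xk_meas[OF BM dt] by measurable

lemma S_meas[measurable]: "S n \<in> borel_measurable M"
  unfolding S_def[abs_def] by measurable

lemma ln_rho_prod: "ln (c * (\<Prod>k<n. gf a sig dt (Xk B dt k \<omega>))) = ln c + S n \<omega>" if "c > 0"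
proof -
  have "(\<Prod>k<n. gf a sig dt (Xk B dt k \<omega>)) > 0" using gf_pos by (simp add: prod_pos)
  then have "ln (c * (\<Prod>k<n. gf a sig dt (Xk B dt k \<omega>))) = ln c + ln (\<Prod>k<n. gf a sig dt (Xk B dt k \<omega>))"
    using that by (intro ln_mult_pos)
  also have "ln (\<Prod>k<n. gf a sig dt (Xk B dt k \<omega>)) = S n \<omega>"
    unfolding S_def Lk_def using gf_pos by (subst Transcendental.ln_prod) (auto simp: less_imp_neq[symmetric])
  finally show ?thesis .
qed

lemma chernoff:
  assumes th: "\<bar>\<theta>\<bar> \<le> 1"
  shows "measure M {\<omega>\<in>space M. c \<le> \<theta> * S n \<omega>}
     \<le> (\<integral>\<omega>. exp (\<theta> * ln (gf a sig dt (Xk B dt 0 \<omega>))) \<partial>M) ^ n / exp c"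
proof -
  let ?f = "\<lambda>x. exp (\<theta> * ln (gf a sig dt x))"
  have f: "?f \<in> borel_measurable borel" by measurable
  have int: "integrable M (\<lambda>\<omega>. ?f (Xk B dt k \<omega>))" for k
    by (rule phi_bound(1)[OF Xk_dist[OF BM dt] dt PM ha th])
  have eq: "exp (\<theta> * S n \<omega>) = (\<Prod>k<n. ?f (Xk B dt k \<omega>))" for \<omega>
    unfolding S_def Lk_def by (simp add: sum_distrib_left exp_sum)
  have "{\<omega>\<in>space M. c \<le> \<theta> * S n \<omega>} = {\<omega>\<in>space M. exp c \<le> (\<Prod>k<n. ?f (Xk B dt k \<omega>))}"
    unfolding eq[symmetric] by simp
  also have "measure M \<dots> \<le> (\<integral>\<omega>. (\<Prod>k<n. ?f (Xk B dt k \<omega>)) \<partial>M) / exp c"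
    by (rule integral_Markov_inequality_measure[OF E_prod(2)[OF BM dt f int], of "space M"])
       (auto intro!: prod_nonneg)
  also have "(\<integral>\<omega>. (\<Prod>k<n. ?f (Xk B dt k \<omega>)) \<partial>M) = (\<integral>\<omega>. ?f (Xk B dt 0 \<omega>) \<partial>M) ^ n"
    by (rule E_prod(1)[OF BM dt f int])
  finally show ?thesis .
qed

definition "Vc = dt^2 * R3f a sig dt + 5 * (sig^2*dt + dt^2 * Wf a sig)"

lemma tail:
  assumes sg: "\<bar>s\<bar> = 1" and tau: "0 < \<tau>" "\<tau> \<le> 1"
  shows "measure M {\<omega>\<in>space M. real n * \<delta> \<le> s * (S n \<omega> - real n * mu)} \<le> (exp (8 * \<tau>^2 * Vc - \<tau> * \<delta>)) ^ n"
proof -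
  define \<theta> where "\<theta> = s * \<tau>"
  have th: "\<bar>\<theta>\<bar> \<le> 1" unfolding \<theta>_def using sg tau by (simp add: abs_mult)
  have s2: "s^2 = 1" using sg by (metis power2_abs one_power2)
  have th2: "\<theta>^2 = \<tau>^2" unfolding \<theta>_def by (simp add: power_mult_distrib s2)
  define \<phi> where "\<phi> = (\<integral>\<omega>. exp (\<theta> * ln (gf a sig dt (Xk B dt 0 \<omega>))) \<partial>M)"
  have phi0: "0 \<le> \<phi>" unfolding \<phi>_def by simp
  have "\<phi> \<le> 1 + \<theta> * mu + 8 * \<theta>^2 * Vc"
    unfolding \<phi>_def mu_def Lk_def Vc_def by (rule phi_bound(2)[OF Xk_dist[OF BM dt] dt PM ha th])
  also have "\<dots> \<le> exp (\<theta> * mu + 8 * \<tau>^2 * Vc)" using exp_ge_add_one_self[of "\<theta> * mu + 8 * \<tau>^2 * Vc"] th2 by (simp add: add.assoc)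
  finally have phib: "\<phi> \<le> exp (\<theta> * mu + 8 * \<tau>^2 * Vc)" .
  have set_eq: "{\<omega>\<in>space M. real n * \<delta> \<le> s * (S n \<omega> - real n * mu)} = {\<omega>\<in>space M. real n * (\<tau> * \<delta> + \<theta> * mu) \<le> \<theta> * S n \<omega>}"
  proof -
    have "real n * \<delta> \<le> s * (S n \<omega> - real n * mu) \<longleftrightarrow> real n * (\<tau> * \<delta> + \<theta> * mu) \<le> \<theta> * S n \<omega>" for \<omega>
    proof -
      have "real n * \<delta> \<le> s * (S n \<omega> - real n * mu) \<longleftrightarrow> \<tau> * (real n * \<delta>) \<le> \<tau> * (s * (S n \<omega> - real n * mu))"
        using tau by simp
      also have "\<dots> \<longleftrightarrow> real n * (\<tau> * \<delta> + \<theta> * mu) \<le> \<theta> * S n \<omega>"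
        unfolding \<theta>_def by (simp add: algebra_simps)
      finally show ?thesis .
    qed
    then show ?thesis by auto
  qed
  have "measure M {\<omega>\<in>space M. real n * \<delta> \<le> s * (S n \<omega> - real n * mu)} \<le> \<phi> ^ n / exp (real n * (\<tau> * \<delta> + \<theta> * mu))"
    unfolding set_eq \<phi>_def by (rule chernoff[OF th])
  also have "\<dots> \<le> exp (\<theta> * mu + 8 * \<tau>^2 * Vc) ^ n / exp (real n * (\<tau> * \<delta> + \<theta> * mu))"
    by (intro divide_right_mono power_mono phib phi0) auto
  also have "\<dots> = (exp (8 * \<tau>^2 * Vc - \<tau> * \<delta>)) ^ n"
    by (simp add: exp_of_nat_mult[symmetric] exp_diff[symmetric] algebra_simps)
  finally show ?thesis .
qed

lemma tail_AE:
  assumes sg: "\<bar>s\<bar> = 1" and tau: "0 < \<tau>" "\<tau> \<le> 1" and neg: "8 * \<tau>^2 * Vc - \<tau> * \<delta> < 0"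
  shows "AE \<omega> in M. eventually (\<lambda>n. s * (S n \<omega> - real n * mu) < real n * \<delta>) sequentially"
proof -
  define A where "A n = {\<omega>\<in>space M. real n * \<delta> \<le> s * (S n \<omega> - real n * mu)}" for n
  have [measurable]: "A n \<in> sets M" for n unfolding A_def by measurable
  have fin: "emeasure M (A n) < \<infinity>" for n
    using finite_measure.emeasure_finite[OF prob_space.finite_measure[OF PM], of "A n"] by (simp add: less_top)
  have sum: "summable (\<lambda>n. measure M (A n))"
  proof (rule summable_comparison_test')
    show "summable (\<lambda>n. (exp (8 * \<tau>^2 * Vc - \<tau> * \<delta>)) ^ n)"
      using neg by (intro summable_geometric) simp
    show "norm (measure M (A n)) \<le> (exp (8 * \<tau>^2 * Vc - \<tau> * \<delta>)) ^ n" for n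
      unfolding A_def using tail[OF sg tau] by simp
  qed
  have "AE \<omega> in M. eventually (\<lambda>n. \<omega> \<in> space M - A n) sequentially"
    by (rule borel_cantelli_AE1[OF _ fin sum]) simp
  moreover have "AE \<omega> in M. eventually (\<lambda>n. \<omega> \<in> space M - A n) sequentially \<longrightarrow> eventually (\<lambda>n. s * (S n \<omega> - real n * mu) < real n * \<delta>) sequentially"
  proof (rule AE_I2, rule impI)
    fix \<omega> assume "\<omega> \<in> space M" "eventually (\<lambda>n. \<omega> \<in> space M - A n) sequentially"
    from this(2) show "eventually (\<lambda>n. s * (S n \<omega> - real n * mu) < real n * \<delta>) sequentially"
      by (rule eventually_mono) (auto simp: A_def)
  qed
  ultimately show ?thesis by (rule AE_mp)
qed

end

lemma eventually_small_inv:
  fixes c e :: real assumes "e > 0"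
  shows "eventually (\<lambda>n. \<bar>c / real n\<bar> \<le> e) sequentially"
proof -
  have "(\<lambda>n. c / real n) \<longlonglongrightarrow> 0" by (rule lim_const_over_n)
  from tendstoD[OF this assms] show ?thesis
    by (rule eventually_mono) (simp add: dist_real_def)
qed

lemma limsup_between:
  fixes f :: "nat \<Rightarrow> real"
  assumes "eventually (\<lambda>n. lo \<le> f n \<and> f n \<le> hi) sequentially"
  shows "ereal lo \<le> limsup (\<lambda>n. ereal (f n)) \<and> limsup (\<lambda>n. ereal (f n)) \<le> ereal hi"
proof
  have "ereal lo \<le> liminf (\<lambda>n. ereal (f n))"
    by (rule Liminf_bounded) (use assms in \<open>auto elim: eventually_mono\<close>)
  also have "\<dots> \<le> limsup (\<lambda>n. ereal (f n))" by (rule Liminf_le_Limsup) simp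
  finally show "ereal lo \<le> limsup (\<lambda>n. ereal (f n))" .
  show "limsup (\<lambda>n. ereal (f n)) \<le> ereal hi"
    by (rule Limsup_bounded) (use assms in \<open>auto elim: eventually_mono\<close>)
qed

context
  fixes M :: "'a measure" and B :: "real \<Rightarrow> 'a \<Rightarrow> real" and dt a sig r0 :: real
  assumes BM: "brownian_motion M B" and dt: "dt > 0" and ha: "\<bar>a\<bar>*dt \<le> 1/4"
    and r0: "r0 > 0"
begin

definition "rhoP n \<omega> = r0 * (\<Prod>k<n. gf a sig dt (Xk B dt k \<omega>))"

lemma ms_part:
  assumes hx: "dt * (2*\<bar>a + sig^2\<bar> + \<bar>Wf a sig\<bar>) \<le> 1/2" and dt1: "dt \<le> 1"
  defines "C0 \<equiv> (2*\<bar>a + sig^2\<bar> + \<bar>Wf a sig\<bar>)^2 + \<bar>Wf a sig\<bar>"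
  shows "ereal ((a + sig^2) - (C0 + 1) * dt) \<le> limsup (\<lambda>n. ereal (ln (sqrt (integral\<^sup>L M (\<lambda>\<omega>. (rhoP n \<omega>)\<^sup>2))) / (real n * dt)))
      \<and> limsup (\<lambda>n. ereal (ln (sqrt (integral\<^sup>L M (\<lambda>\<omega>. (rhoP n \<omega>)\<^sup>2))) / (real n * dt))) \<le> ereal ((a + sig^2) + (C0 + 1) * dt)"
    and "(a + sig^2) + C0 * dt < 0 \<Longrightarrow> ms_exp_stable M rhoP dt"
    and "(a + sig^2) - C0 * dt > 0 \<Longrightarrow> ms_exp_blowup M rhoP dt"
proof -
  define ms where "ms = a + sig^2"
  define Km where "Km = Wf a sig"
  define m where "m = 1 + dt*(2*a + 2* sig^2) + dt^2 * Km"
  define x where "x = dt * (2*ms) + dt^2 * Km"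
  define L where "L = ln m / (2*dt)"
  have mx: "m = 1 + x" unfolding m_def x_def ms_def by (simp add: algebra_simps)
  have ax: "\<bar>x\<bar> \<le> dt * (2*\<bar>ms\<bar> + \<bar>Km\<bar>)"
  proof -
    have "\<bar>x\<bar> \<le> \<bar>dt * (2*ms)\<bar> + \<bar>dt^2 * Km\<bar>" unfolding x_def by (rule abs_triangle_ineq)
    also have "\<dots> = dt * (2*\<bar>ms\<bar>) + dt^2 * \<bar>Km\<bar>" using dt by (simp add: abs_mult)
    also have "dt^2 * \<bar>Km\<bar> \<le> dt * \<bar>Km\<bar>" using dt dt1 by (simp add: power2_eq_square mult_right_le_one_le mult_left_le_one_le mult_le_cancel_right1 mult_right_mono)
    finally show ?thesis by (simp add: algebra_simps)
  qed
  have x12: "\<bar>x\<bar> \<le> 1/2" using ax hx unfolding ms_def Km_def by linarith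
  have mpos: "m > 0" using x12 mx by linarith
  have lnx: "\<bar>ln m - x\<bar> \<le> 2 * x^2" unfolding mx by (rule abs_ln_one_plus_x_minus_x_bound[OF x12])
  have LC: "\<bar>L - ms\<bar> \<le> C0 * dt"
  proof -
    have "L - ms = (ln m - x) / (2*dt) + dt * Km / 2" unfolding L_def x_def using dt by (simp add: field_simps power2_eq_square)
    then have "\<bar>L - ms\<bar> \<le> \<bar>(ln m - x) / (2*dt)\<bar> + \<bar>dt * Km / 2\<bar>"
      by (simp only: abs_triangle_ineq)
    also have "\<dots> = \<bar>ln m - x\<bar> / (2*dt) + dt * \<bar>Km\<bar> / 2"
      using dt by (simp add: abs_mult abs_divide)
    also have "\<bar>ln m - x\<bar> / (2*dt) \<le> 2 * x^2 / (2*dt)" using lnx dt by (intro divide_right_mono) auto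
    also have "2 * x^2 / (2*dt) = x^2 / dt" by simp
    also have "x^2 \<le> (dt * (2*\<bar>ms\<bar> + \<bar>Km\<bar>))^2" using ax by (metis abs_ge_zero power2_abs power_mono)
    then have "x^2 / dt \<le> dt * (2*\<bar>ms\<bar> + \<bar>Km\<bar>)^2" using dt by (simp add: field_simps power2_eq_square)
    finally have "\<bar>L - ms\<bar> \<le> dt * (2*\<bar>ms\<bar> + \<bar>Km\<bar>)^2 + dt * \<bar>Km\<bar> / 2" by simp
    also have "\<dots> \<le> C0 * dt" unfolding C0_def ms_def Km_def using dt by (simp add: algebra_simps)
    finally show ?thesis .
  qed
  have En: "integral\<^sup>L M (\<lambda>\<omega>. (rhoP n \<omega>)\<^sup>2) = r0^2 * m ^ n" for n
    unfolding rhoP_def m_def Km_def by (rule ms_value[OF BM dt ha])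
  have sq: "sqrt (integral\<^sup>L M (\<lambda>\<omega>. (rhoP n \<omega>)\<^sup>2)) = r0 * exp (L * (real n * dt))" for n
  proof -
    have "sqrt (r0^2 * m ^ n) = r0 * sqrt m ^ n" using r0 mpos by (simp add: real_sqrt_mult real_sqrt_power)
    also have "sqrt m ^ n = exp (L * (real n * dt))"
    proof -
      have "sqrt m ^ n = exp (ln (sqrt m)) ^ n" using mpos by simp
      also have "\<dots> = exp (real n * ln (sqrt m))" by (simp add: exp_of_nat_mult)
      also have "real n * ln (sqrt m) = L * (real n * dt)" unfolding L_def using mpos dt by (simp add: ln_sqrt)
      finally show ?thesis .
    qed
    finally show ?thesis unfolding En .
  qed
  have Qn: "ln (sqrt (integral\<^sup>L M (\<lambda>\<omega>. (rhoP n \<omega>)\<^sup>2))) / (real n * dt) = (ln r0 / dt) / real n + L" if "n > 0" for n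
  proof -
    have "ln (sqrt (integral\<^sup>L M (\<lambda>\<omega>. (rhoP n \<omega>)\<^sup>2))) = ln r0 + L * (real n * dt)"
      unfolding sq using r0 by (simp add: ln_mult_pos)
    then show ?thesis using that dt by (simp add: field_simps)
  qed
  have ev: "eventually (\<lambda>n. \<bar>(ln r0 / dt) / real n\<bar> \<le> dt) sequentially"
    by (rule eventually_small_inv[OF dt])
  have ev2: "eventually (\<lambda>n. n > 0) sequentially" by (rule eventually_gt_at_top)
  have "eventually (\<lambda>n. ms - (C0 + 1) * dt \<le> ln (sqrt (integral\<^sup>L M (\<lambda>\<omega>. (rhoP n \<omega>)\<^sup>2))) / (real n * dt)
      \<and> ln (sqrt (integral\<^sup>L M (\<lambda>\<omega>. (rhoP n \<omega>)\<^sup>2))) / (real n * dt) \<le> ms + (C0 + 1) * dt) sequentially"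
    using ev ev2
  proof (eventually_elim)
    case (elim n)
    have e: "-dt \<le> (ln r0 / dt) / real n \<and> (ln r0 / dt) / real n \<le> dt" using elim(1) by (metis abs_le_iff minus_le_iff)
    have l: "ms - C0 * dt \<le> L \<and> L \<le> ms + C0 * dt" using LC by (simp only: abs_le_iff) linarith
    have "C0 * dt + dt = (C0 + 1) * dt" by (simp add: algebra_simps)
    then show ?case unfolding Qn[OF elim(2)] using e l by linarith
  qed
  from limsup_between[OF this]
  show "ereal ((a + sig^2) - (C0 + 1) * dt) \<le> limsup (\<lambda>n. ereal (ln (sqrt (integral\<^sup>L M (\<lambda>\<omega>. (rhoP n \<omega>)\<^sup>2))) / (real n * dt)))
      \<and> limsup (\<lambda>n. ereal (ln (sqrt (integral\<^sup>L M (\<lambda>\<omega>. (rhoP n \<omega>)\<^sup>2))) / (real n * dt))) \<le> ereal ((a + sig^2) + (C0 + 1) * dt)"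
    unfolding ms_def .
  show "ms_exp_stable M rhoP dt" if "(a + sig^2) + C0 * dt < 0"
    unfolding ms_exp_stable_def
  proof (intro exI conjI)
    show "r0 > 0" by (rule r0)
    show "- L > 0" using that LC unfolding ms_def by (simp add: abs_le_iff)
    show "\<forall>\<^sub>F n in sequentially. sqrt (integral\<^sup>L M (\<lambda>\<omega>. (rhoP n \<omega>)\<^sup>2)) \<le> r0 * exp (- (- L) * (real n * dt))"
      by (simp add: sq)
  qed
  show "ms_exp_blowup M rhoP dt" if "(a + sig^2) - C0 * dt > 0"
    unfolding ms_exp_blowup_def
  proof (intro exI conjI)
    show "r0 > 0" by (rule r0)
    show "L > 0" using that LC unfolding ms_def by (simp add: abs_le_iff)
    show "\<forall>\<^sub>F n in sequentially. sqrt (integral\<^sup>L M (\<lambda>\<omega>. (rhoP n \<omega>)\<^sup>2)) \<ge> r0 * exp (L * (real n * dt))"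
      by (simp add: sq)
  qed
qed

lemma rhoP_pos: "rhoP n \<omega> > 0"
  unfolding rhoP_def using r0 gf_pos[OF BM dt ha] by (simp add: prod_pos)

lemma as_part:
  assumes dt1: "dt \<le> 1" and K3: "\<bar>R3f a sig dt\<bar> \<le> K3" and K4: "\<bar>R4f a sig dt\<bar> \<le> K4"
  defines "Kmu \<equiv> \<bar>Wf a sig\<bar>/2 + K3/3 + 64 * K4"
  shows "AE \<omega> in M. ereal (a - (Kmu + 2) * sqrt dt) \<le> limsup (\<lambda>n. ereal (ln \<bar>rhoP n \<omega>\<bar> / (real n * dt)))
           \<and> limsup (\<lambda>n. ereal (ln \<bar>rhoP n \<omega>\<bar> / (real n * dt))) \<le> ereal (a + (Kmu + 2) * sqrt dt)"
    and "a + (Kmu + 1) * sqrt dt < 0 \<Longrightarrow> as_exp_stable M rhoP dt"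
    and "a - (Kmu + 1) * sqrt dt > 0 \<Longrightarrow> as_exp_blowup M rhoP dt"
proof -
  define sd where "sd = sqrt dt"
  have sd0: "sd > 0" unfolding sd_def using dt by simp
  have sd2: "sd^2 = dt" unfolding sd_def using dt by simp
  have sd1: "sd \<le> 1" unfolding sd_def using dt1 by simp
  have dtsd: "dt \<le> sd" using sd2 sd1 sd0 by (metis power2_eq_square mult_left_le_one_le less_imp_le)
  define mu0 where "mu0 = mu M B dt a sig"
  define Kv where "Kv = K3 + 5 * sig^2 + 5 * \<bar>Wf a sig\<bar> + 1"
  have K30: "K3 \<ge> 0" using K3 by linarith
  have K40: "K4 \<ge> 0" using K4 by linarith
  have Kv1: "Kv \<ge> 1" unfolding Kv_def using K30 by simp
  have mub: "\<bar>mu0 - a*dt\<bar> \<le> dt * sd * Kmu"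
  proof -
    have "\<bar>mu0 - a*dt\<bar> \<le> dt^2 * (\<bar>Wf a sig\<bar> / 2 + \<bar>R3f a sig dt\<bar> / 3 + 64 * \<bar>R4f a sig dt\<bar>)"
      unfolding mu0_def Submission.mu_def[OF BM dt ha] Submission.Lk_def[OF BM dt ha, abs_def] by (rule mu_bound[OF Xk_dist[OF BM dt] dt P[OF BM dt] ha])
    also have "\<dots> \<le> dt^2 * Kmu" unfolding Kmu_def using K3 K4 by (intro mult_left_mono) auto
    also have "dt^2 * Kmu \<le> dt * sd * Kmu"
    proof -
      have "Kmu \<ge> 0" unfolding Kmu_def using K30 K40 by simp
      moreover have "dt^2 \<le> dt * sd" using dtsd dt by (simp add: power2_eq_square)
      ultimately show ?thesis by (intro mult_right_mono) auto
    qed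
    finally show ?thesis .
  qed
  have Vcb: "Vc dt a sig \<le> dt * Kv"
  proof -
    have a1: "dt^2 * R3f a sig dt \<le> dt * K3"
    proof -
      have "dt^2 * R3f a sig dt \<le> dt^2 * K3" using K3 by (intro mult_left_mono) auto
      also have "\<dots> \<le> dt * K3" using dt dt1 K30 by (simp add: power2_eq_square mult_right_le_one_le mult_le_cancel_left1 mult_right_mono)
      finally show ?thesis .
    qed
    have a2: "dt^2 * Wf a sig \<le> dt * \<bar>Wf a sig\<bar>"
    proof -
      have "dt^2 * Wf a sig \<le> dt^2 * \<bar>Wf a sig\<bar>" by (intro mult_left_mono) auto
      also have "\<dots> \<le> dt * \<bar>Wf a sig\<bar>" using dt dt1 by (simp add: power2_eq_square mult_right_mono)
      finally show ?thesis .
    qed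
    show ?thesis unfolding Submission.Vc_def[OF BM dt ha] Kv_def using a1 a2 dt by (simp add: algebra_simps)
  qed
  define \<tau> where "\<tau> = sd / (16 * Kv)"
  define \<delta> where "\<delta> = dt * sd"
  have tau0: "\<tau> > 0" unfolding \<tau>_def using sd0 Kv1 by simp
  have tau1: "\<tau> \<le> 1" unfolding \<tau>_def using sd1 Kv1 sd0 by (simp add: field_simps)
  have neg: "8 * \<tau>^2 * Vc dt a sig - \<tau> * \<delta> < 0"
  proof -
    have "8 * \<tau>^2 * Vc dt a sig \<le> 8 * \<tau>^2 * (dt * Kv)" using Vcb by (intro mult_left_mono) auto
    also have "8 * \<tau>^2 * (dt * Kv) = \<tau> * \<delta> / 2" unfolding \<tau>_def \<delta>_def using Kv1 by (simp add: field_simps power2_eq_square)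
    also have "\<tau> * \<delta> / 2 < \<tau> * \<delta>" unfolding \<delta>_def using tau0 sd0 dt by simp
    finally show ?thesis by simp
  qed
  have AE2: "AE \<omega> in M. eventually (\<lambda>n. \<bar>S B dt a sig n \<omega> - real n * mu0\<bar> < real n * \<delta>) sequentially"
  proof -
    have p: "AE \<omega> in M. eventually (\<lambda>n. 1 * (S B dt a sig n \<omega> - real n * mu0) < real n * \<delta>) sequentially"
      unfolding mu0_def by (rule tail_AE[OF BM dt ha _ tau0 tau1 neg]) simp
    have m: "AE \<omega> in M. eventually (\<lambda>n. (-1) * (S B dt a sig n \<omega> - real n * mu0) < real n * \<delta>) sequentially"
      unfolding mu0_def by (rule tail_AE[OF BM dt ha _ tau0 tau1 neg]) simp
    from p m show ?thesis
    proof (eventually_elim)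
      case (elim \<omega>)
      from elim(1) elim(2) show ?case
        by eventually_elim (simp add: abs_less_iff)
    qed
  qed
  have key: "real n * dt * (a - (Kmu + 1) * sd) < S B dt a sig n \<omega> \<and> S B dt a sig n \<omega> < real n * dt * (a + (Kmu + 1) * sd)"
    if h: "\<bar>S B dt a sig n \<omega> - real n * mu0\<bar> < real n * \<delta>" for n \<omega>
  proof -
    have b1: "real n * mu0 \<le> real n * (a*dt + dt * sd * Kmu)" using mub by (intro mult_left_mono) auto
    have b2: "real n * (a*dt - dt * sd * Kmu) \<le> real n * mu0" using mub by (intro mult_left_mono) auto
    have e1: "real n * dt * (a + (Kmu + 1) * sd) = real n * (a*dt + dt * sd * Kmu) + real n * \<delta>"
      unfolding \<delta>_def by (simp add: algebra_simps)
    have e2: "real n * dt * (a - (Kmu + 1) * sd) = real n * (a*dt - dt * sd * Kmu) - real n * \<delta>"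
      unfolding \<delta>_def by (simp add: algebra_simps)
    show ?thesis unfolding e1 e2 using h b1 b2 by (simp add: abs_less_iff)
  qed
  have lnrho: "ln \<bar>rhoP n \<omega>\<bar> = ln r0 + S B dt a sig n \<omega>" for n \<omega>
    using rhoP_pos[of n \<omega>] unfolding rhoP_def by (simp add: ln_rho_prod[OF BM dt ha r0])
  show "AE \<omega> in M. ereal (a - (Kmu + 2) * sqrt dt) \<le> limsup (\<lambda>n. ereal (ln \<bar>rhoP n \<omega>\<bar> / (real n * dt)))
           \<and> limsup (\<lambda>n. ereal (ln \<bar>rhoP n \<omega>\<bar> / (real n * dt))) \<le> ereal (a + (Kmu + 2) * sqrt dt)"
    using AE2
  proof (rule AE_mp[OF _ AE_I2], intro impI)
    fix \<omega> assume ev: "eventually (\<lambda>n. \<bar>S B dt a sig n \<omega> - real n * mu0\<bar> < real n * \<delta>) sequentially"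
    have "eventually (\<lambda>n. a - (Kmu + 2) * sqrt dt \<le> ln \<bar>rhoP n \<omega>\<bar> / (real n * dt) \<and> ln \<bar>rhoP n \<omega>\<bar> / (real n * dt) \<le> a + (Kmu + 2) * sqrt dt) sequentially"
      using ev eventually_small_inv[OF sd0, of "ln r0 / dt"] eventually_gt_at_top[of 0]
    proof (eventually_elim)
      case (elim n)
      have ndt: "real n * dt > 0" using elim(3) dt by simp
      have k: "real n * dt * (a - (Kmu + 1) * sd) < S B dt a sig n \<omega>" "S B dt a sig n \<omega> < real n * dt * (a + (Kmu + 1) * sd)"
        using key[OF elim(1)] by auto
      have k1: "a - (Kmu + 1) * sd < S B dt a sig n \<omega> / (real n * dt)" using k(1) ndt by (simp add: pos_less_divide_eq mult.commute)
      have k2: "S B dt a sig n \<omega> / (real n * dt) < a + (Kmu + 1) * sd" using k(2) ndt by (simp add: pos_divide_less_eq mult.commute)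
      have q: "ln \<bar>rhoP n \<omega>\<bar> / (real n * dt) = (ln r0 / dt) / real n + S B dt a sig n \<omega> / (real n * dt)"
        unfolding lnrho using elim(3) dt by (simp add: field_simps)
      have e: "-sd \<le> (ln r0 / dt) / real n" "(ln r0 / dt) / real n \<le> sd" using elim(2) by (metis abs_le_iff minus_le_iff)+
      have "(Kmu + 2) * sd = (Kmu + 1) * sd + sd" by (simp add: algebra_simps)
      then show ?case unfolding q sd_def[symmetric] using k1 k2 e by linarith
    qed
    then show "ereal (a - (Kmu + 2) * sqrt dt) \<le> limsup (\<lambda>n. ereal (ln \<bar>rhoP n \<omega>\<bar> / (real n * dt)))
           \<and> limsup (\<lambda>n. ereal (ln \<bar>rhoP n \<omega>\<bar> / (real n * dt))) \<le> ereal (a + (Kmu + 2) * sqrt dt)"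
      by (rule limsup_between)
  qed
  show "as_exp_stable M rhoP dt" if neg0: "a + (Kmu + 1) * sqrt dt < 0"
    unfolding as_exp_stable_def
  proof (intro exI conjI)
    show "-(a + (Kmu + 1) * sqrt dt) > 0" using neg0 by simp
    show "AE \<omega> in M. \<exists>C>0. \<forall>\<^sub>F n in sequentially. \<bar>rhoP n \<omega>\<bar> \<le> C * exp (- (-(a + (Kmu + 1) * sqrt dt)) * (real n * dt))"
      using AE2
    proof (rule AE_mp[OF _ AE_I2], intro impI exI conjI)
      fix \<omega> assume ev: "eventually (\<lambda>n. \<bar>S B dt a sig n \<omega> - real n * mu0\<bar> < real n * \<delta>) sequentially"
      show "r0 > 0" by (rule r0)
      show "\<forall>\<^sub>F n in sequentially. \<bar>rhoP n \<omega>\<bar> \<le> r0 * exp (- (-(a + (Kmu + 1) * sqrt dt)) * (real n * dt))"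
        using ev
      proof (rule eventually_mono)
        fix n assume "\<bar>S B dt a sig n \<omega> - real n * mu0\<bar> < real n * \<delta>"
        from key[OF this] have "S B dt a sig n \<omega> \<le> real n * dt * (a + (Kmu + 1) * sd)" by simp
        then have "ln \<bar>rhoP n \<omega>\<bar> \<le> ln r0 + (- (-(a + (Kmu + 1) * sqrt dt)) * (real n * dt))"
          unfolding lnrho sd_def by (simp add: algebra_simps)
        then have "exp (ln \<bar>rhoP n \<omega>\<bar>) \<le> exp (ln r0 + (- (-(a + (Kmu + 1) * sqrt dt)) * (real n * dt)))" by simp
        then show "\<bar>rhoP n \<omega>\<bar> \<le> r0 * exp (- (-(a + (Kmu + 1) * sqrt dt)) * (real n * dt))"
          using rhoP_pos[of n \<omega>] r0 by (simp add: exp_add)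
      qed
    qed
  qed
  show "as_exp_blowup M rhoP dt" if pos0: "a - (Kmu + 1) * sqrt dt > 0"
    unfolding as_exp_blowup_def
  proof (intro exI conjI)
    show "a - (Kmu + 1) * sqrt dt > 0" by (rule pos0)
    show "AE \<omega> in M. \<exists>C>0. \<forall>\<^sub>F n in sequentially. \<bar>rhoP n \<omega>\<bar> \<ge> C * exp ((a - (Kmu + 1) * sqrt dt) * (real n * dt))"
      using AE2
    proof (rule AE_mp[OF _ AE_I2], intro impI exI conjI)
      fix \<omega> assume ev: "eventually (\<lambda>n. \<bar>S B dt a sig n \<omega> - real n * mu0\<bar> < real n * \<delta>) sequentially"
      show "r0 > 0" by (rule r0)
      show "\<forall>\<^sub>F n in sequentially. \<bar>rhoP n \<omega>\<bar> \<ge> r0 * exp ((a - (Kmu + 1) * sqrt dt) * (real n * dt))"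
        using ev
      proof (rule eventually_mono)
        fix n assume "\<bar>S B dt a sig n \<omega> - real n * mu0\<bar> < real n * \<delta>"
        from key[OF this] have "real n * dt * (a - (Kmu + 1) * sd) \<le> S B dt a sig n \<omega>" by simp
        then have "ln r0 + ((a - (Kmu + 1) * sqrt dt) * (real n * dt)) \<le> ln \<bar>rhoP n \<omega>\<bar>"
          unfolding lnrho sd_def by (simp add: algebra_simps)
        then have "exp (ln r0 + ((a - (Kmu + 1) * sqrt dt) * (real n * dt))) \<le> exp (ln \<bar>rhoP n \<omega>\<bar>)" by simp
        then show "\<bar>rhoP n \<omega>\<bar> \<ge> r0 * exp ((a - (Kmu + 1) * sqrt dt) * (real n * dt))"
          using rhoP_pos[of n \<omega>] r0 by (simp add: exp_add)
      qed
    qed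
  qed
qed

end

lemma bounded01:
  fixes f :: "real \<Rightarrow> real"
  assumes "continuous_on {0..1} f"
  shows "\<exists>K. \<forall>t\<in>{0..1}. \<bar>f t\<bar> \<le> K"
proof -
  have "compact (f ` {0..1})" by (rule compact_continuous_image[OF assms compact_Icc])
  then have "bounded (f ` {0..1})" by (rule compact_imp_bounded)
  then show ?thesis unfolding bounded_real by auto
qed

lemma R3_bound: "\<exists>K. \<forall>t\<in>{0..1}. \<bar>R3f a sig t\<bar> \<le> K"
  by (rule bounded01) (unfold R3f_def Let_def, intro continuous_intros)

lemma R4_bound: "\<exists>K. \<forall>t\<in>{0..1}. \<bar>R4f a sig t\<bar> \<le> K"
  by (rule bounded01) (unfold R4f_def Let_def, intro continuous_intros)

theorem theorem1p1:
  fixes lam eps sig x0 y0 :: real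
    and M :: "'a measure" and B :: "real \<Rightarrow> 'a \<Rightarrow> real"
  assumes "(x0, y0) \<noteq> (0, 0)"
    and "brownian_motion M B"
  shows "\<exists>dt1 C1 C2. 0 < dt1 \<and> dt1 < 1 \<and> C1 > 0 \<and> C2 > 0 \<and>
    (\<forall>dt. 0 < dt \<and> dt < dt1 \<longrightarrow>
      (let rho = milstein_rho lam eps sig x0 y0 B dt;
           ms = lam + eps\<^sup>2 / 2 + sig\<^sup>2 / 2;
           as = lam + eps\<^sup>2 / 2 - sig\<^sup>2 / 2
       in ereal (ms - C1 * dt)
            \<le> limsup (\<lambda>n. ereal (ln (sqrt (integral\<^sup>L M (\<lambda>\<omega>. (rho n \<omega>)\<^sup>2))) / (real n * dt)))
        \<and> limsup (\<lambda>n. ereal (ln (sqrt (integral\<^sup>L M (\<lambda>\<omega>. (rho n \<omega>)\<^sup>2))) / (real n * dt)))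
            \<le> ereal (ms + C1 * dt)
        \<and> (AE \<omega> in M.
             ereal (as - C2 * sqrt dt) \<le> limsup (\<lambda>n. ereal (ln \<bar>rho n \<omega>\<bar> / (real n * dt)))
           \<and> limsup (\<lambda>n. ereal (ln \<bar>rho n \<omega>\<bar> / (real n * dt))) \<le> ereal (as + C2 * sqrt dt))
        \<and> (ms < 0 \<longrightarrow> ms_exp_stable M rho dt)
        \<and> (ms > 0 \<longrightarrow> ms_exp_blowup M rho dt)
        \<and> (as < 0 \<longrightarrow> as_exp_stable M rho dt)
        \<and> (as > 0 \<longrightarrow> as_exp_blowup M rho dt)))"
proof -
  note BM = assms(2)
  define a where "a = lam + eps\<^sup>2 / 2 - sig\<^sup>2 / 2"
  define ms where "ms = a + sig^2"
  have ms_eq: "lam + eps\<^sup>2 / 2 + sig\<^sup>2 / 2 = ms" unfolding ms_def a_def by simp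
  define r0 where "r0 = sqrt (x0\<^sup>2 + y0\<^sup>2)"
  have r0: "r0 > 0" unfolding r0_def using assms(1) by (auto simp: sum_power2_gt_zero_iff)
  obtain K3 where K3: "\<forall>t\<in>{0..1}. \<bar>R3f a sig t\<bar> \<le> K3" using R3_bound by blast
  obtain K4 where K4: "\<forall>t\<in>{0..1}. \<bar>R4f a sig t\<bar> \<le> K4" using R4_bound by blast
  have K30: "K3 \<ge> 0" using K3 by (metis abs_ge_zero atLeastAtMost_iff order_trans zero_le_one order_refl)
  have K40: "K4 \<ge> 0" using K4 by (metis abs_ge_zero atLeastAtMost_iff order_trans zero_le_one order_refl)
  define Km where "Km = Wf a sig"
  define C0 where "C0 = (2*\<bar>ms\<bar> + \<bar>Km\<bar>)^2 + \<bar>Km\<bar>"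
  define C1 where "C1 = C0 + 1"
  define Kmu where "Kmu = \<bar>Km\<bar>/2 + K3/3 + 64 * K4"
  define C2 where "C2 = Kmu + 2"
  have C00: "C0 \<ge> 0" unfolding C0_def by simp
  have C1p: "C1 > 0" unfolding C1_def using C00 by simp
  have Kmu0: "Kmu \<ge> 0" unfolding Kmu_def using K30 K40 by simp
  have C2p: "C2 > 0" unfolding C2_def using Kmu0 by simp
  define D0 where "D0 = min (1/2) (min (1/(4*(\<bar>a\<bar>+1))) (1/(2*(2*\<bar>ms\<bar>+\<bar>Km\<bar>)+1)))"
  define dms where "dms = (if ms = 0 then 1 else \<bar>ms\<bar>/(2*C1))"
  define das where "das = (if a = 0 then 1 else (\<bar>a\<bar>/(2*C2))^2)"
  define dt1 where "dt1 = min D0 (min dms das)"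
  have D0p: "D0 > 0"
  proof -
    have "0 < 4 * \<bar>a\<bar> + 4" "0 < 4 * \<bar>ms\<bar> + 2 * \<bar>Km\<bar> + 1"
      using abs_ge_zero[of a] abs_ge_zero[of ms] abs_ge_zero[of Km] by linarith+
    then show ?thesis unfolding D0_def by simp
  qed
  have dmsp: "dms > 0" unfolding dms_def using C1p by simp
  have dasp: "das > 0" unfolding das_def using C2p by simp
  have dt1p: "dt1 > 0" unfolding dt1_def using D0p dmsp dasp by simp
  have "D0 \<le> 1/2" unfolding D0_def by (rule min.cobounded1)
  then have dt1h: "dt1 \<le> 1/2" unfolding dt1_def by linarith
  show ?thesis
  proof (intro exI conjI allI impI)
    show "0 < dt1" by (rule dt1p)
    show "dt1 < 1" using dt1h by simp
    show "C1 > 0" by (rule C1p)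
    show "C2 > 0" by (rule C2p)
    fix dt assume dtr: "0 < dt \<and> dt < dt1"
    have dt: "dt > 0" using dtr by simp
    have dtD0: "dt < D0" using dtr unfolding dt1_def by simp
    have dtdms: "dt < dms" using dtr unfolding dt1_def by simp
    have dtdas: "dt < das" using dtr unfolding dt1_def by simp
    have dt_1: "dt \<le> 1" using dtD0 unfolding D0_def by simp
    have ha: "\<bar>a\<bar> * dt \<le> 1/4"
    proof -
      have "dt < 1/(4*(\<bar>a\<bar>+1))" using dtD0 unfolding D0_def by simp
      then have "dt * (4*(\<bar>a\<bar>+1)) < 1" by (simp add: field_simps add_pos_nonneg)
      then show ?thesis using dt by (simp add: algebra_simps)
    qed
    have hx: "dt * (2*\<bar>a + sig^2\<bar> + \<bar>Wf a sig\<bar>) \<le> 1/2"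
    proof -
      define X where "X = 2*\<bar>ms\<bar>+\<bar>Km\<bar>"
      have X0: "X \<ge> 0" unfolding X_def by simp
      have "dt < 1/(2*X+1)" using dtD0 unfolding D0_def X_def by simp
      then have "dt * (2*X+1) < 1" using X0 by (simp add: field_simps)
      then have "dt * X \<le> 1/2" using dt by (simp add: algebra_simps)
      then show ?thesis unfolding X_def ms_def Km_def .
    qed
    have rho_eq: "milstein_rho lam eps sig x0 y0 B dt = rhoP B dt a sig r0"
      by (intro ext) (simp only: rho_prod rhoP_def[OF BM dt ha r0] a_def[symmetric] r0_def[symmetric])
    have K3d: "\<bar>R3f a sig dt\<bar> \<le> K3" using K3 dt dt_1 by simp
    have K4d: "\<bar>R4f a sig dt\<bar> \<le> K4" using K4 dt dt_1 by simp
    note MS = ms_part[OF BM dt ha r0 hx dt_1, folded ms_def Km_def, folded C0_def]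
    note AS = as_part[OF BM dt ha r0 dt_1 K3d K4d, folded Km_def, folded Kmu_def]
    show "let rho = milstein_rho lam eps sig x0 y0 B dt;
           ms = lam + eps\<^sup>2 / 2 + sig\<^sup>2 / 2;
           as = lam + eps\<^sup>2 / 2 - sig\<^sup>2 / 2
       in ereal (ms - C1 * dt)
            \<le> limsup (\<lambda>n. ereal (ln (sqrt (integral\<^sup>L M (\<lambda>\<omega>. (rho n \<omega>)\<^sup>2))) / (real n * dt)))
        \<and> limsup (\<lambda>n. ereal (ln (sqrt (integral\<^sup>L M (\<lambda>\<omega>. (rho n \<omega>)\<^sup>2))) / (real n * dt)))
            \<le> ereal (ms + C1 * dt)
        \<and> (AE \<omega> in M.
             ereal (as - C2 * sqrt dt) \<le> limsup (\<lambda>n. ereal (ln \<bar>rho n \<omega>\<bar> / (real n * dt)))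
           \<and> limsup (\<lambda>n. ereal (ln \<bar>rho n \<omega>\<bar> / (real n * dt))) \<le> ereal (as + C2 * sqrt dt))
        \<and> (ms < 0 \<longrightarrow> ms_exp_stable M rho dt)
        \<and> (ms > 0 \<longrightarrow> ms_exp_blowup M rho dt)
        \<and> (as < 0 \<longrightarrow> as_exp_stable M rho dt)
        \<and> (as > 0 \<longrightarrow> as_exp_blowup M rho dt)"
      unfolding Let_def rho_eq ms_eq a_def[symmetric]
    proof (intro conjI impI)
      show "ereal (ms - C1 * dt) \<le> limsup (\<lambda>n. ereal (ln (sqrt (integral\<^sup>L M (\<lambda>\<omega>. (rhoP B dt a sig r0 n \<omega>)\<^sup>2))) / (real n * dt)))"
        using MS(1) unfolding C1_def by simp
      show "limsup (\<lambda>n. ereal (ln (sqrt (integral\<^sup>L M (\<lambda>\<omega>. (rhoP B dt a sig r0 n \<omega>)\<^sup>2))) / (real n * dt))) \<le> ereal (ms + C1 * dt)"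
        using MS(1) unfolding C1_def by simp
      show "AE \<omega> in M. ereal (a - C2 * sqrt dt) \<le> limsup (\<lambda>n. ereal (ln \<bar>rhoP B dt a sig r0 n \<omega>\<bar> / (real n * dt)))
           \<and> limsup (\<lambda>n. ereal (ln \<bar>rhoP B dt a sig r0 n \<omega>\<bar> / (real n * dt))) \<le> ereal (a + C2 * sqrt dt)"
        using AS(1) unfolding C2_def .
      show "ms_exp_stable M (rhoP B dt a sig r0) dt" if "ms < 0"
      proof (rule MS(2))
        have "dt < \<bar>ms\<bar>/(2*C1)" using dtdms that unfolding dms_def by simp
        then have "C1 * dt < \<bar>ms\<bar>/2" using C1p by (simp add: field_simps)
        moreover have "C0 * dt \<le> C1 * dt" unfolding C1_def using dt by simp
        ultimately show "ms + C0 * dt < 0" using that by simp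
      qed
      show "ms_exp_blowup M (rhoP B dt a sig r0) dt" if "ms > 0"
      proof (rule MS(3))
        have "dt < \<bar>ms\<bar>/(2*C1)" using dtdms that unfolding dms_def by simp
        then have "C1 * dt < \<bar>ms\<bar>/2" using C1p by (simp add: field_simps)
        moreover have "C0 * dt \<le> C1 * dt" unfolding C1_def using dt by simp
        ultimately show "ms - C0 * dt > 0" using that by simp
      qed
      have sq: "(Kmu + 1) * sqrt dt < \<bar>a\<bar>" if "a \<noteq> 0"
      proof -
        have "dt < (\<bar>a\<bar>/(2*C2))^2" using dtdas that unfolding das_def by simp
        then have "sqrt dt < sqrt ((\<bar>a\<bar>/(2*C2))^2)" by (rule real_sqrt_less_mono)
        also have "sqrt ((\<bar>a\<bar>/(2*C2))^2) = \<bar>a\<bar>/(2*C2)" using C2p by simp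
        finally have "sqrt dt < \<bar>a\<bar>/(2*C2)" .
        then have "C2 * sqrt dt < \<bar>a\<bar>/2" using C2p by (simp add: field_simps)
        moreover have "(Kmu + 1) * sqrt dt \<le> C2 * sqrt dt" unfolding C2_def using dt by (intro mult_right_mono) auto
        moreover have "\<bar>a\<bar>/2 \<le> \<bar>a\<bar>" by simp
        ultimately show ?thesis by linarith
      qed
      show "as_exp_stable M (rhoP B dt a sig r0) dt" if "a < 0"
      proof (rule AS(2))
        have "(Kmu + 1) * sqrt dt < \<bar>a\<bar>" using sq that by simp
        then show "a + (Kmu + 1) * sqrt dt < 0" using that by simp
      qed
      show "as_exp_blowup M (rhoP B dt a sig r0) dt" if "a > 0"
      proof (rule AS(3))
        have "(Kmu + 1) * sqrt dt < \<bar>a\<bar>" using sq that by simp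
        then show "a - (Kmu + 1) * sqrt dt > 0" using that by simp
      qed
    qed
  qed
qed

end
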